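(* Let $S_1\subseteq S_2$ be strongly $E^*$-unitary inverse semigroups with zero with $S_1\subseteq_cS_2$, let $\varphi:S_2\setminus\{0\}\to G$ be a grading, and let $E_{k,g}$, $\phi_{k,g}$ and the induced partial actions of $G$ on $\mathcal T_c(E_k)$ be as in the context. Suppose that for all $x,y\in E_1$ and $s\in S_2$ there exists $s'\in S_1$ with $xsy\le s'$. Then for all $g\in G$, $x,y\in E_1$ and $a\in E_{2,g^{-1}}$ there exists $Z\in\mathcal T_c(E_{1,g})$ with $V_x\cap\tilde\phi_{2,g}(V_y\cap V_a)\le Z$.
   Context: For an inverse semigroup $S$ with zero, $E$ is its semilattice of idempotents; the natural order on $S$ is $x\le y\iff x=ey$ for some $e\in E$. $S$ is strongly $E^*$-unitary via $\varphi:S\setminus\{0\}\to G$ if $\varphi^{-1}(1_G)=E\setminus\{0\}$ and $\varphi(ab)=\varphi(a)\varphi(b)$ whenever $ab\ne0$; a grading on $S_2$ restricts to one on $S_1$. For a semilattice $P$ with $0$: a cover of $x$ is a finite $\{x_i\}$ with $x_i\le x$ meeting nontrivially every nonzero $y\le x$; tight filters contain a member of each cover of each of their elements; $V_x$ is the set of tight filters containing $x$, and $\mathcal T_c(P)$ is the generalized Boolean algebra of compact open subsets of the tight spectrum. $S_1\subseteq_cS_2$ means $S_1$ is an inverse subsemigroup and every cover in $E_1$ is a cover in $E_2$; then $V^{E_1}_x\mapsto V^{E_2}_x$ identifies $\mathcal T_c(E_1)\subseteq\mathcal T_c(E_2)$. For $k=1,2$: $E_{k,g}=\{x\in E_k:x\le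 ss^*\text{ for some }s\in S_k,\ \varphi(s)=g\}$, $\phi_{k,g}(x)=sxs^*$ for $x\in E_{k,g^{-1}}$ (any $s\in S_k$ with $\varphi(s)=g$, $x\le s^*s$); $\mathcal T_c(E_{k,g})$ denotes the ideal of $\mathcal T_c(E_k)$ generated by $\{V_x:x\in E_{k,g}\}$, and $\tilde\phi_{k,g}:\mathcal T_c(E_{k,g^{-1}})\to\mathcal T_c(E_{k,g})$ is the isomorphism generated by $V_x\mapsto V_{\phi_{k,g}(x)}$. *)

theory Defs
  imports "HOL-Analysis.Analysis"
begin

definition inverse_semigroup_zero :: "'a set \<Rightarrow> ('a \<Rightarrow> 'a \<Rightarrow> 'a) \<Rightarrow> 'a \<Rightarrow> bool" where
  "inverse_semigroup_zero S m z \<longleftrightarrow>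
     (\<forall>a\<in>S. \<forall>b\<in>S. m a b \<in> S) \<and>
     (\<forall>a\<in>S. \<forall>b\<in>S. \<forall>c\<in>S. m (m a b) c = m a (m b c)) \<and>
     z \<in> S \<and> (\<forall>a\<in>S. m z a = z \<and> m a z = z) \<and>
     (\<forall>a\<in>S. \<exists>!b. b \<in> S \<and> m (m a b) a = a \<and> m (m b a) b = b)"

definition sinv :: "'a set \<Rightarrow> ('a \<Rightarrow> 'a \<Rightarrow> 'a) \<Rightarrow> 'a \<Rightarrow> 'a" where
  "sinv S m a = (THE b. b \<in> S \<and> m (m a b) a = a \<and> m (m b a) b = b)"

definition idem :: "'a set \<Rightarrow> ('a \<Rightarrow> 'a \<Rightarrow> 'a) \<Rightarrow> 'a set" where
  "idem S m = {e \<in> S. m e e = e}"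

definition nle :: "'a set \<Rightarrow> ('a \<Rightarrow> 'a \<Rightarrow> 'a) \<Rightarrow> 'a \<Rightarrow> 'a \<Rightarrow> bool" where
  "nle S m x y \<longleftrightarrow> (\<exists>e\<in>idem S m. x = m e y)"

definition inverse_subsemigroup :: "'a set \<Rightarrow> 'a set \<Rightarrow> ('a \<Rightarrow> 'a \<Rightarrow> 'a) \<Rightarrow> 'a \<Rightarrow> bool" where
  "inverse_subsemigroup S1 S m z \<longleftrightarrow> S1 \<subseteq> S \<and> z \<in> S1 \<and>
     (\<forall>a\<in>S1. \<forall>b\<in>S1. m a b \<in> S1) \<and> (\<forall>a\<in>S1. sinv S m a \<in> S1)"

text \<open>Grading phi : S \ {0} -> G witnessing strong E*-unitarity (G written additively).\<close>
definition grading :: "'a set \<Rightarrow> ('a \<Rightarrow> 'a \<Rightarrow> 'a) \<Rightarrow> 'a \<Rightarrow> ('a \<Rightarrow> 'g::group_add) \<Rightarrow> bool" where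
  "grading S m z \<phi> \<longleftrightarrow>
     {s \<in> S. s \<noteq> z \<and> \<phi> s = 0} = idem S m - {z} \<and>
     (\<forall>a\<in>S. \<forall>b\<in>S. m a b \<noteq> z \<longrightarrow> \<phi> (m a b) = \<phi> a + \<phi> b)"

definition strongly_E_unitary :: "'a set \<Rightarrow> ('a \<Rightarrow> 'a \<Rightarrow> 'a) \<Rightarrow> 'a \<Rightarrow> ('a \<Rightarrow> 'g::group_add) \<Rightarrow> bool" where
  "strongly_E_unitary S m z \<phi> \<longleftrightarrow> inverse_semigroup_zero S m z \<and> grading S m z \<phi>"

definition sle :: "('a \<Rightarrow> 'a \<Rightarrow> 'a) \<Rightarrow> 'a \<Rightarrow> 'a \<Rightarrow> bool" where
  "sle m x y \<longleftrightarrow> m x y = x"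

definition is_cover :: "'a set \<Rightarrow> ('a \<Rightarrow> 'a \<Rightarrow> 'a) \<Rightarrow> 'a \<Rightarrow> 'a \<Rightarrow> 'a set \<Rightarrow> bool" where
  "is_cover P m z x C \<longleftrightarrow> finite C \<and> C \<subseteq> P \<and> (\<forall>c\<in>C. sle m c x) \<and>
     (\<forall>y\<in>P. y \<noteq> z \<and> sle m y x \<longrightarrow> (\<exists>c\<in>C. m c y \<noteq> z))"

definition is_filter :: "'a set \<Rightarrow> ('a \<Rightarrow> 'a \<Rightarrow> 'a) \<Rightarrow> 'a \<Rightarrow> 'a set \<Rightarrow> bool" where
  "is_filter P m z F \<longleftrightarrow> F \<subseteq> P \<and> F \<noteq> {} \<and> z \<notin> F \<and>
     (\<forall>x\<in>F. \<forall>y\<in>P. sle m x y \<longrightarrow> y \<in> F) \<and> (\<forall>x\<in>F. \<forall>y\<in>F. m x y \<in> F)"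

definition tight_filter :: "'a set \<Rightarrow> ('a \<Rightarrow> 'a \<Rightarrow> 'a) \<Rightarrow> 'a \<Rightarrow> 'a set \<Rightarrow> bool" where
  "tight_filter P m z F \<longleftrightarrow> is_filter P m z F \<and>
     (\<forall>x\<in>F. \<forall>C. is_cover P m z x C \<longrightarrow> C \<inter> F \<noteq> {})"

definition tight_spec :: "'a set \<Rightarrow> ('a \<Rightarrow> 'a \<Rightarrow> 'a) \<Rightarrow> 'a \<Rightarrow> 'a set set" where
  "tight_spec P m z = {F. tight_filter P m z F}"

definition Vset :: "'a set \<Rightarrow> ('a \<Rightarrow> 'a \<Rightarrow> 'a) \<Rightarrow> 'a \<Rightarrow> 'a \<Rightarrow> 'a set set" where
  "Vset P m z x = {F \<in> tight_spec P m z. x \<in> F}"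

text \<open>Topology of the tight spectrum: subspace of the product topology on {0,1}^P,
  i.e. generated by the subbasic sets {F. x \<in> F} and {F. x \<notin> F}, x \<in> P.\<close>
definition tight_top :: "'a set \<Rightarrow> ('a \<Rightarrow> 'a \<Rightarrow> 'a) \<Rightarrow> 'a \<Rightarrow> 'a set topology" where
  "tight_top P m z = topology_generated_by
     ({{F \<in> tight_spec P m z. x \<in> F} | x. x \<in> P} \<union> {{F \<in> tight_spec P m z. x \<notin> F} | x. x \<in> P})"

definition Tc :: "'a set \<Rightarrow> ('a \<Rightarrow> 'a \<Rightarrow> 'a) \<Rightarrow> 'a \<Rightarrow> 'a set set set" where
  "Tc P m z = {U. openin (tight_top P m z) U \<and> compactin (tight_top P m z) U}"

definition gba_ideal :: "'b set set \<Rightarrow> 'b set set \<Rightarrow> bool" where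
  "gba_ideal T I \<longleftrightarrow> I \<subseteq> T \<and> {} \<in> I \<and> (\<forall>U\<in>I. \<forall>W\<in>I. U \<union> W \<in> I) \<and>
     (\<forall>U\<in>I. \<forall>W\<in>T. W \<subseteq> U \<longrightarrow> W \<in> I)"

definition ideal_gen :: "'b set set \<Rightarrow> 'b set set \<Rightarrow> 'b set set" where
  "ideal_gen T B = \<Inter>{I. gba_ideal T I \<and> B \<subseteq> I}"

definition gba_hom :: "'b set set \<Rightarrow> ('b set \<Rightarrow> 'c set) \<Rightarrow> bool" where
  "gba_hom D h \<longleftrightarrow> (\<forall>U\<in>D. \<forall>W\<in>D. h (U \<union> W) = h U \<union> h W \<and> h (U \<inter> W) = h U \<inter> h W \<and>
     h (U - W) = h U - h W)"

definition Ekg :: "'a set \<Rightarrow> ('a \<Rightarrow> 'a \<Rightarrow> 'a) \<Rightarrow> 'a \<Rightarrow> ('a \<Rightarrow> 'g::group_add) \<Rightarrow> 'g \<Rightarrow> 'a set" where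
  "Ekg S m z \<phi> g = {x \<in> idem S m. \<exists>s\<in>S. s \<noteq> z \<and> \<phi> s = g \<and> nle S m x (m s (sinv S m s))}"

definition phikg :: "'a set \<Rightarrow> ('a \<Rightarrow> 'a \<Rightarrow> 'a) \<Rightarrow> 'a \<Rightarrow> ('a \<Rightarrow> 'g::group_add) \<Rightarrow> 'g \<Rightarrow> 'a \<Rightarrow> 'a" where
  "phikg S m z \<phi> g x =
     (let s = (SOME s. s \<in> S \<and> s \<noteq> z \<and> \<phi> s = g \<and> nle S m x (m (sinv S m s) s))
      in m (m s x) (sinv S m s))"

definition TcE :: "'a set \<Rightarrow> ('a \<Rightarrow> 'a \<Rightarrow> 'a) \<Rightarrow> 'a \<Rightarrow> ('a \<Rightarrow> 'g::group_add) \<Rightarrow> 'g \<Rightarrow> 'a set set set" where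
  "TcE S m z \<phi> g = ideal_gen (Tc (idem S m) m z) {Vset (idem S m) m z x | x. x \<in> Ekg S m z \<phi> g}"

definition phit :: "'a set \<Rightarrow> ('a \<Rightarrow> 'a \<Rightarrow> 'a) \<Rightarrow> 'a \<Rightarrow> ('a \<Rightarrow> 'g::group_add) \<Rightarrow> 'g \<Rightarrow> 'a set set \<Rightarrow> 'a set set" where
  "phit S m z \<phi> g = (THE h. bij_betw h (TcE S m z \<phi> (-g)) (TcE S m z \<phi> g) \<and>
       gba_hom (TcE S m z \<phi> (-g)) h \<and>
       (\<forall>x\<in>Ekg S m z \<phi> (-g). h (Vset (idem S m) m z x) = Vset (idem S m) m z (phikg S m z \<phi> g x)) \<and>
       (\<forall>U. U \<notin> TcE S m z \<phi> (-g) \<longrightarrow> h U = {}))"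

definition cover_sub :: "'a set \<Rightarrow> 'a set \<Rightarrow> ('a \<Rightarrow> 'a \<Rightarrow> 'a) \<Rightarrow> 'a \<Rightarrow> bool" where
  "cover_sub S1 S2 m z \<longleftrightarrow> inverse_subsemigroup S1 S2 m z \<and>
     (\<forall>x\<in>idem S1 m. \<forall>C. is_cover (idem S1 m) m z x C \<longrightarrow> is_cover (idem S2 m) m z x C)"

definition iota :: "'a set \<Rightarrow> 'a set \<Rightarrow> ('a \<Rightarrow> 'a \<Rightarrow> 'a) \<Rightarrow> 'a \<Rightarrow> 'a set set \<Rightarrow> 'a set set" where
  "iota S1 S2 m z = (THE h. inj_on h (Tc (idem S1 m) m z) \<and>
       h ` Tc (idem S1 m) m z \<subseteq> Tc (idem S2 m) m z \<and>
       gba_hom (Tc (idem S1 m) m z) h \<and>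
       (\<forall>x\<in>idem S1 m. h (Vset (idem S1 m) m z x) = Vset (idem S2 m) m z x) \<and>
       (\<forall>U. U \<notin> Tc (idem S1 m) m z \<longrightarrow> h U = {}))"

end

theory Submission
  imports Defs
begin


locale slat =
  fixes P :: "'a set" and m :: "'a \<Rightarrow> 'a \<Rightarrow> 'a" and z :: 'a
  assumes cl: "a \<in> P \<Longrightarrow> b \<in> P \<Longrightarrow> m a b \<in> P"
    and cm: "a \<in> P \<Longrightarrow> b \<in> P \<Longrightarrow> m a b = m b a"
    and as: "a \<in> P \<Longrightarrow> b \<in> P \<Longrightarrow> c \<in> P \<Longrightarrow> m (m a b) c = m a (m b c)"
    and idm: "a \<in> P \<Longrightarrow> m a a = a"
    and zP: "z \<in> P"
    and zl: "a \<in> P \<Longrightarrow> m z a = z"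
begin

abbreviation "V \<equiv> Vset P m z"
abbreviation "spec \<equiv> tight_spec P m z"
abbreviation "T \<equiv> tight_top P m z"

lemma zr: "a \<in> P \<Longrightarrow> m a z = z" using cm zl zP by metis

lemma lc: "a\<in>P \<Longrightarrow> b\<in>P \<Longrightarrow> c\<in>P \<Longrightarrow> m a (m b c) = m b (m a c)"
  by (metis as cm)

lemma sle_meet1: "a\<in>P \<Longrightarrow> b\<in>P \<Longrightarrow> sle m (m a b) a"
  unfolding sle_def by (metis as cm idm)
lemma sle_meet2: "a\<in>P \<Longrightarrow> b\<in>P \<Longrightarrow> sle m (m a b) b"
  unfolding sle_def by (metis as idm)
lemma sle_trans: "a\<in>P \<Longrightarrow> b\<in>P \<Longrightarrow> c\<in>P \<Longrightarrow> sle m a b \<Longrightarrow> sle m b c \<Longrightarrow> sle m a c"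
  unfolding sle_def by (metis as)
lemma sle_antisym: "a\<in>P \<Longrightarrow> b\<in>P \<Longrightarrow> sle m a b \<Longrightarrow> sle m b a \<Longrightarrow> a = b"
  unfolding sle_def by (metis cm)
lemma sle_refl: "a\<in>P \<Longrightarrow> sle m a a" unfolding sle_def by (simp add: idm)
lemma sle_z: "a\<in>P \<Longrightarrow> sle m z a" unfolding sle_def by (simp add: zl)
lemma sle_zD: "a\<in>P \<Longrightarrow> sle m a z \<Longrightarrow> a = z" unfolding sle_def by (simp add: zr)
lemma sle_glb: "a\<in>P \<Longrightarrow> b\<in>P \<Longrightarrow> c\<in>P \<Longrightarrow> sle m c a \<Longrightarrow> sle m c b \<Longrightarrow> sle m c (m a b)"
  unfolding sle_def by (metis as)
lemma sle_mono: "a\<in>P \<Longrightarrow> b\<in>P \<Longrightarrow> c\<in>P \<Longrightarrow> d\<in>P \<Longrightarrow> sle m a b \<Longrightarrow> sle m c d \<Longrightarrow> sle m (m a c) (m b d)"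
  by (meson cl sle_glb sle_meet1 sle_meet2 sle_trans)

lemma specD:
  assumes "F \<in> spec"
  shows "F \<subseteq> P" "z \<notin> F" "F \<noteq> {}"
    "\<And>x y. x \<in> F \<Longrightarrow> y \<in> P \<Longrightarrow> sle m x y \<Longrightarrow> y \<in> F"
    "\<And>x y. x \<in> F \<Longrightarrow> y \<in> F \<Longrightarrow> m x y \<in> F"
    "\<And>x C. x \<in> F \<Longrightarrow> is_cover P m z x C \<Longrightarrow> C \<inter> F \<noteq> {}"
  using assms unfolding tight_spec_def tight_filter_def is_filter_def by blast+

lemma spec_meet: "F \<in> spec \<Longrightarrow> a\<in>P \<Longrightarrow> b\<in>P \<Longrightarrow> m a b \<in> F \<longleftrightarrow> a \<in> F \<and> b \<in> F"
  by (meson cl sle_meet1 sle_meet2 specD(4,5))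

lemma V_Int: "a\<in>P \<Longrightarrow> b\<in>P \<Longrightarrow> V a \<inter> V b = V (m a b)"
  unfolding Vset_def using spec_meet by blast

lemma V_z: "V z = {}" unfolding Vset_def using specD(2) by blast

lemma V_mono: "a\<in>P \<Longrightarrow> b\<in>P \<Longrightarrow> sle m a b \<Longrightarrow> V a \<subseteq> V b"
  unfolding Vset_def using specD(4) by blast

lemma subbasis_Union:
  "\<Union>({{F \<in> spec. x \<in> F} | x. x \<in> P} \<union> {{F \<in> spec. x \<notin> F} | x. x \<in> P}) = spec"
  using zP by blast

lemma topspace_T: "topspace T = spec"
  unfolding tight_top_def topology_generated_by_topspace using subbasis_Union by simp

lemma open_V: "x \<in> P \<Longrightarrow> openin T (V x)"
  unfolding tight_top_def Vset_def by (rule topology_generated_by_Basis) blast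

lemma open_neg: "x \<in> P \<Longrightarrow> openin T {F \<in> spec. x \<notin> F}"
  unfolding tight_top_def by (rule topology_generated_by_Basis) blast

lemma closed_V: "x \<in> P \<Longrightarrow> closedin T (V x)"
proof -
  assume x: "x \<in> P"
  have "topspace T - V x = {F \<in> spec. x \<notin> F}" unfolding topspace_T Vset_def by blast
  then show ?thesis unfolding closedin_def using open_neg[OF x] topspace_T
    by (auto simp: Vset_def)
qed

definition Bs :: "'a \<Rightarrow> 'a set \<Rightarrow> 'a set set" where
  "Bs x Y = V x - \<Union>(V ` Y)"

lemma open_Bs: "x \<in> P \<Longrightarrow> finite Y \<Longrightarrow> Y \<subseteq> P \<Longrightarrow> openin T (Bs x Y)"
  unfolding Bs_def
  by (intro openin_diff open_V closedin_Union) (auto intro: closed_V)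

lemma compact_V:
  assumes x: "x \<in> P"
  shows "compactin T (V x)"
proof -
  define X where "X = product_topology (\<lambda>_::'a. discrete_topology (UNIV::bool set)) P"
  define \<Phi> where "\<Phi> = (\<lambda>f::'a\<Rightarrow>bool. {i\<in>P. f i})"
  have cX: "compact_space X" unfolding X_def
    by (simp add: compact_space_product_topology compact_space_discrete_topology)
  have proj: "continuous_map X (discrete_topology UNIV) (\<lambda>f. f i)" if "i \<in> P" for i
    unfolding X_def using continuous_map_product_projection[where X="\<lambda>_::'a. discrete_topology (UNIV::bool set)", OF that] by simp
  define Pos where "Pos i = {f \<in> topspace X. f i}" for i
  define Neg where "Neg i = {f \<in> topspace X. \<not> f i}" for i
  have cPos: "closedin X (Pos i)" if "i\<in>P" for i
    using closedin_continuous_map_preimage[OF proj[OF that], of "{True}"] by (simp add: Pos_def)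
  have cNeg: "closedin X (Neg i)" if "i\<in>P" for i
    using closedin_continuous_map_preimage[OF proj[OF that], of "{False}"] by (simp add: Neg_def)
  have oPos: "openin X (Pos i)" if "i\<in>P" for i
    using openin_continuous_map_preimage[OF proj[OF that], of "{True}"] by (simp add: Pos_def)
  have oNeg: "openin X (Neg i)" if "i\<in>P" for i
    using openin_continuous_map_preimage[OF proj[OF that], of "{False}"] by (simp add: Neg_def)
  define \<K> where "\<K> = {Pos x, Neg z} \<union> {Neg a \<union> Pos b | a b. a\<in>P \<and> b\<in>P \<and> sle m a b}
     \<union> {Neg a \<union> Neg b \<union> Pos (m a b) | a b. a \<in> P \<and> b \<in> P}
     \<union> {Neg a \<union> \<Union>(Pos ` C) | a C. a \<in> P \<and> is_cover P m z a C}"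
  define K where "K = \<Inter>\<K>"
  have c1: "closedin X (Neg a \<union> Pos b)" if "a\<in>P" "b\<in>P" for a b
    using cNeg cPos that by (intro closedin_Un) auto
  have c2: "closedin X (Neg a \<union> Neg b \<union> Pos (m a b))" if "a\<in>P" "b\<in>P" for a b
    using cNeg cPos that cl by (intro closedin_Un) auto
  have c3: "closedin X (Neg a \<union> \<Union>(Pos ` C))" if "a\<in>P" "is_cover P m z a C" for a C
  proof (intro closedin_Un closedin_Union)
    show "closedin X (Neg a)" using cNeg that by blast
    show "finite (Pos ` C)" using that by (simp add: is_cover_def)
    fix S assume "S \<in> Pos ` C"
    then show "closedin X S" using cPos that by (auto simp: is_cover_def)
  qed
  have cK: "closedin X K" unfolding K_def
  proof (rule closedin_Inter)
    show "\<K> \<noteq> {}" unfolding \<K>_def by blast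
    fix S assume SK: "S \<in> \<K>"
    consider "S = Pos x" | "S = Neg z" | a b where "a\<in>P" "b\<in>P" "sle m a b" "S = Neg a \<union> Pos b"
      | a b where "a\<in>P" "b\<in>P" "S = Neg a \<union> Neg b \<union> Pos (m a b)"
      | a C where "a\<in>P" "is_cover P m z a C" "S = Neg a \<union> \<Union>(Pos ` C)"
      using SK unfolding \<K>_def by auto
    then show "closedin X S" by cases (use c1 c2 c3 cPos[OF x] cNeg[OF zP] in auto)
  qed
  have KX: "K \<subseteq> topspace X" unfolding K_def \<K>_def Pos_def by blast
  have Kchar: "f \<in> K \<longleftrightarrow> f \<in> topspace X \<and> f x \<and> tight_filter P m z (\<Phi> f)" for f
  proof
    assume f: "f \<in> K"
    then have fX: "f \<in> topspace X" using KX by blast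
    have inK: "f \<in> S" if "S \<in> \<K>" for S using f that unfolding K_def by blast
    have fx: "f x" using inK[of "Pos x"] unfolding \<K>_def Pos_def by blast
    have fz: "\<not> f z" using inK[of "Neg z"] unfolding \<K>_def Neg_def by blast
    have up: "f b" if "a\<in>P" "b\<in>P" "sle m a b" "f a" for a b
      using inK[of "Neg a \<union> Pos b"] that unfolding \<K>_def Neg_def Pos_def by blast
    have mt: "f (m a b)" if "a\<in>P" "b\<in>P" "f a" "f b" for a b
      using inK[of "Neg a \<union> Neg b \<union> Pos (m a b)"] that unfolding \<K>_def Neg_def Pos_def by blast
    have tg: "\<exists>c\<in>C. f c" if "a\<in>P" "is_cover P m z a C" "f a" for a C
      using inK[of "Neg a \<union> \<Union>(Pos ` C)"] that unfolding \<K>_def Neg_def Pos_def by blast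
    have "is_filter P m z (\<Phi> f)"
      unfolding is_filter_def
    proof (intro conjI ballI impI)
      show "\<Phi> f \<subseteq> P" by (auto simp: \<Phi>_def)
      show "\<Phi> f \<noteq> {}" using x fx by (auto simp: \<Phi>_def)
      show "z \<notin> \<Phi> f" using fz by (auto simp: \<Phi>_def)
      fix a b assume "a \<in> \<Phi> f" "b \<in> P" "sle m a b" then show "b \<in> \<Phi> f" using up by (auto simp: \<Phi>_def)
    next
      fix a b assume "a \<in> \<Phi> f" "b \<in> \<Phi> f" then show "m a b \<in> \<Phi> f" using mt cl by (auto simp: \<Phi>_def)
    qed
    moreover have "C \<inter> \<Phi> f \<noteq> {}" if "a \<in> \<Phi> f" "is_cover P m z a C" for a C
    proof -
      from tg[of a C] that obtain c where "c \<in> C" "f c" by (auto simp: \<Phi>_def)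
      moreover have "C \<subseteq> P" using that(2) by (simp add: is_cover_def)
      ultimately show ?thesis by (auto simp: \<Phi>_def)
    qed
    ultimately have "tight_filter P m z (\<Phi> f)" unfolding tight_filter_def by blast
    then show "f \<in> topspace X \<and> f x \<and> tight_filter P m z (\<Phi> f)" using fX fx by blast
  next
    assume f: "f \<in> topspace X \<and> f x \<and> tight_filter P m z (\<Phi> f)"
    then have tf: "tight_filter P m z (\<Phi> f)" by blast
    have fX: "f \<in> topspace X" and fx: "f x" using f by blast+
    have isf: "is_filter P m z (\<Phi> f)" using tf unfolding tight_filter_def by blast
    have fz: "\<not> f z" using isf zP unfolding is_filter_def \<Phi>_def by blast
    have up: "f b" if "a\<in>P" "b\<in>P" "sle m a b" "f a" for a b
    proof -
      have "a \<in> \<Phi> f" using that by (simp add: \<Phi>_def)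
      then have "b \<in> \<Phi> f" using isf that unfolding is_filter_def by blast
      then show ?thesis by (simp add: \<Phi>_def)
    qed
    have mt: "f (m a b)" if "a\<in>P" "b\<in>P" "f a" "f b" for a b
    proof -
      have "a \<in> \<Phi> f" "b \<in> \<Phi> f" using that by (simp_all add: \<Phi>_def)
      then have "m a b \<in> \<Phi> f" using isf unfolding is_filter_def by blast
      then show ?thesis by (simp add: \<Phi>_def)
    qed
    have tg: "\<exists>c\<in>C. f c" if "a\<in>P" "is_cover P m z a C" "f a" for a C
    proof -
      have "a \<in> \<Phi> f" using that by (simp add: \<Phi>_def)
      then have "C \<inter> \<Phi> f \<noteq> {}" using tf that unfolding tight_filter_def by blast
      then show ?thesis by (auto simp: \<Phi>_def)
    qed
    have "f \<in> S" if SK: "S \<in> \<K>" for S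
    proof -
      consider "S = Pos x" | "S = Neg z" | a b where "a\<in>P" "b\<in>P" "sle m a b" "S = Neg a \<union> Pos b"
      | a b where "a\<in>P" "b\<in>P" "S = Neg a \<union> Neg b \<union> Pos (m a b)"
      | a C where "a\<in>P" "is_cover P m z a C" "S = Neg a \<union> \<Union>(Pos ` C)"
      using SK unfolding \<K>_def by auto
      then show ?thesis
      proof cases
        case 5 then show ?thesis using tg[of a C] fX by (auto simp: Neg_def Pos_def)
      qed (use fX fx fz up mt in \<open>auto simp: Neg_def Pos_def\<close>)
    qed
    then show "f \<in> K" unfolding K_def by blast
  qed
  have cptK: "compactin X K"
    using closed_compactin[of X "topspace X" K] cX cK KX by (simp add: compact_space_def)
  have cont: "continuous_map (subtopology X K) T \<Phi>"
    unfolding tight_top_def continuous_on_generated_topo_iff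
  proof (intro conjI allI impI)
    have tsK: "topspace (subtopology X K) = K" using KX by auto
    fix U assume "U \<in> {{F \<in> spec. x \<in> F} | x. x \<in> P} \<union> {{F \<in> spec. x \<notin> F} | x. x \<in> P}"
    then consider y where "y \<in> P" "U = {F \<in> spec. y \<in> F}" | y where "y \<in> P" "U = {F \<in> spec. y \<notin> F}"
      by blast
    then show "openin (subtopology X K) (\<Phi> -` U \<inter> topspace (subtopology X K))"
    proof cases
      case 1
      have "\<Phi> -` U \<inter> topspace (subtopology X K) = K \<inter> Pos y"
        unfolding tsK 1 using Kchar 1 by (auto simp: \<Phi>_def Pos_def tight_spec_def)
      then show ?thesis using openin_subtopology_Int2[OF oPos[OF 1(1)]] by simp
    next
      case 2
      have "\<Phi> -` U \<inter> topspace (subtopology X K) = K \<inter> Neg y"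
        unfolding tsK 2 using Kchar 2 by (auto simp: \<Phi>_def Neg_def tight_spec_def)
      then show ?thesis using openin_subtopology_Int2[OF oNeg[OF 2(1)]] by simp
    qed
  next
    show "\<Phi> ` topspace (subtopology X K) \<subseteq> \<Union>({{F \<in> spec. x \<in> F} | x. x \<in> P} \<union> {{F \<in> spec. x \<notin> F} | x. x \<in> P})"
      unfolding subbasis_Union using Kchar KX by (auto simp: tight_spec_def)
  qed
  have img: "\<Phi> ` K = V x"
  proof
    show "\<Phi> ` K \<subseteq> V x" using Kchar x by (auto simp: Vset_def tight_spec_def \<Phi>_def)
    show "V x \<subseteq> \<Phi> ` K"
    proof
      fix F assume F: "F \<in> V x"
      then have FP: "F \<subseteq> P" using specD(1) by (auto simp: Vset_def)
      define f where "f = restrict (\<lambda>i. i \<in> F) P"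
      have "\<Phi> f = F" using FP by (auto simp: \<Phi>_def f_def)
      moreover have "f \<in> topspace X" by (simp add: X_def f_def)
      ultimately have "f \<in> K" using Kchar F x by (auto simp: Vset_def tight_spec_def f_def)
      then show "F \<in> \<Phi> ` K" using \<open>\<Phi> f = F\<close> by blast
    qed
  qed
  have "compactin (subtopology X K) K" using cptK by (simp add: compactin_subtopology)
  from image_compactin[OF this cont] show ?thesis using img by simp
qed

end


lemma hom_empty:
  assumes "gba_hom D h" "{} \<in> D" shows "h {} = {}"
  using assms unfolding gba_hom_def by (metis Diff_cancel)

lemma hom_Union:
  assumes h: "gba_hom D h" and e: "{} \<in> D" and un: "\<And>U W. U\<in>D \<Longrightarrow> W\<in>D \<Longrightarrow> U \<union> W \<in> D"
  shows "finite \<U> \<Longrightarrow> \<U> \<subseteq> D \<Longrightarrow> h (\<Union>\<U>) = \<Union>(h ` \<U>) \<and> \<Union>\<U> \<in> D"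
proof (induction rule: finite_induct)
  case empty then show ?case using hom_empty[OF h e] e by simp
next
  case (insert U \<U>)
  have U: "U \<in> D" and UU: "\<U> \<subseteq> D" using insert.prems by auto
  have IH: "h (\<Union>\<U>) = \<Union>(h ` \<U>)" "\<Union>\<U> \<in> D" using insert.IH[OF UU] by auto
  have "h (U \<union> \<Union>\<U>) = h U \<union> h (\<Union>\<U>)" using h U IH(2) unfolding gba_hom_def by blast
  then show ?case using IH un[OF U IH(2)] by simp
qed

lemma hom_Diff_Union:
  assumes h: "gba_hom D h" and e: "{} \<in> D" and un: "\<And>U W. U\<in>D \<Longrightarrow> W\<in>D \<Longrightarrow> U \<union> W \<in> D"
    and "finite \<U>" "\<U> \<subseteq> D" "A \<in> D"
  shows "h (A - \<Union>\<U>) = h A - \<Union>(h ` \<U>)"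
proof -
  have "h (\<Union>\<U>) = \<Union>(h ` \<U>)" "\<Union>\<U> \<in> D" using hom_Union[OF h e un assms(4,5)] by auto
  moreover have "h (A - \<Union>\<U>) = h A - h (\<Union>\<U>)" using h assms(6) calculation(2) unfolding gba_hom_def by blast
  ultimately show ?thesis by simp
qed

context slat
begin

abbreviation "Tcs \<equiv> Tc P m z"

lemma Tc_iff: "U \<in> Tcs \<longleftrightarrow> openin T U \<and> compactin T U" by (simp add: Tc_def)

lemma closed_Bs: "x \<in> P \<Longrightarrow> finite Y \<Longrightarrow> Y \<subseteq> P \<Longrightarrow> closedin T (Bs x Y)"
  unfolding Bs_def
proof (rule closedin_diff)
  assume a: "x \<in> P" "finite Y" "Y \<subseteq> P"
  show "closedin T (V x)" using closed_V[OF a(1)] .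
  show "openin T (\<Union> (V ` Y))" using open_V a(3) by (intro openin_Union) blast
qed

lemma Bs_Tc: "x \<in> P \<Longrightarrow> finite Y \<Longrightarrow> Y \<subseteq> P \<Longrightarrow> Bs x Y \<in> Tcs"
proof -
  assume a: "x \<in> P" "finite Y" "Y \<subseteq> P"
  have "Bs x Y \<subseteq> V x" by (simp add: Bs_def)
  then have "compactin T (Bs x Y)" using closed_compactin[OF compact_V[OF a(1)] _ closed_Bs[OF a]] by blast
  then show ?thesis using open_Bs[OF a] by (simp add: Tc_iff)
qed

lemma V_Tc: "x \<in> P \<Longrightarrow> V x \<in> Tcs"
  using Bs_Tc[of x "{}"] by (simp add: Bs_def)

lemma Hausdorff_T: "Hausdorff_space T"
  unfolding Hausdorff_space_def topspace_T
proof (intro allI impI, elim conjE)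
  fix F G assume F: "F \<in> spec" and G: "G\<in>spec" and ne: "F \<noteq> G"
  from ne have "\<exists>e. (e\<in>F \<and> e\<notin>G) \<or> (e\<in>G \<and> e\<notin>F)" by blast
  then obtain e where e0: "(e\<in>F \<and> e\<notin>G) \<or> (e\<in>G \<and> e\<notin>F)" by blast
  then have e: "e \<in> P" using specD(1)[OF F] specD(1)[OF G] by blast
  from e0 show "\<exists>U W. openin T U \<and> openin T W \<and> F \<in> U \<and> G \<in> W \<and> disjnt U W"
  proof (elim disjE conjE)
    assume "e\<in>F" "e\<notin>G" then show ?thesis using open_V[OF e] open_neg[OF e] F G
      by (intro exI[of _ "V e"] exI[of _ "{F\<in>spec. e\<notin>F}"]) (auto simp: Vset_def disjnt_def)
  next
    assume "e\<in>G" "e\<notin>F" then show ?thesis using open_V[OF e] open_neg[OF e] F G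
      by (intro exI[of _ "{F\<in>spec. e\<notin>F}"] exI[of _ "V e"]) (auto simp: Vset_def disjnt_def)
  qed
qed

lemma Tc_Un: "U \<in> Tcs \<Longrightarrow> W \<in> Tcs \<Longrightarrow> U \<union> W \<in> Tcs"
  unfolding Tc_iff by (simp add: compactin_Un openin_Un)

lemma Tc_Diff: "U \<in> Tcs \<Longrightarrow> W \<in> Tcs \<Longrightarrow> U - W \<in> Tcs"
proof -
  assume U: "U \<in> Tcs" and W: "W \<in> Tcs"
  have cW: "closedin T W" using W Hausdorff_T compactin_imp_closedin unfolding Tc_iff by blast
  have cU: "closedin T U" using U Hausdorff_T compactin_imp_closedin unfolding Tc_iff by blast
  have o: "openin T (U - W)" using U cW unfolding Tc_iff by (intro openin_diff) auto
  have "closedin T (U - W)" using cU W unfolding Tc_iff by (intro closedin_diff) auto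
  then have "compactin T (U - W)" using U closed_compactin[of T U "U - W"] unfolding Tc_iff by blast
  then show ?thesis using o unfolding Tc_iff by blast
qed

lemma Tc_Int: "U \<in> Tcs \<Longrightarrow> W \<in> Tcs \<Longrightarrow> U \<inter> W \<in> Tcs"
  using Tc_Diff by (metis Diff_Diff_Int)

lemma Tc_empty: "{} \<in> Tcs" unfolding Tc_iff by simp

lemma Tc_sub: "U \<in> Tcs \<Longrightarrow> U \<subseteq> spec"
  unfolding Tc_iff using openin_subset topspace_T by metis

definition goodp :: "'a \<times> 'a set \<Rightarrow> bool" where
  "goodp p \<longleftrightarrow> fst p \<in> P \<and> finite (snd p) \<and> snd p \<subseteq> P"

definition UB :: "('a \<times> 'a set) set \<Rightarrow> 'a set set" where
  "UB \<B> = \<Union>((\<lambda>p. Bs (fst p) (snd p)) ` \<B>)"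

lemma UB_Tc: "finite \<B> \<Longrightarrow> \<forall>p\<in>\<B>. goodp p \<Longrightarrow> UB \<B> \<in> Tcs"
  unfolding UB_def
proof (induction rule: finite_induct)
  case empty then show ?case using Tc_empty by simp
next
  case (insert p \<B>)
  then show ?case using Bs_Tc[of "fst p" "snd p"] Tc_Un by (auto simp: goodp_def)
qed

lemma Bs_Int: "x\<in>P \<Longrightarrow> x'\<in>P \<Longrightarrow> Bs x Y \<inter> Bs x' Y' = Bs (m x x') (Y \<union> Y')"
  unfolding Bs_def using V_Int[of x x'] by blast

lemma Bs_Vmeet: "x\<in>P \<Longrightarrow> x'\<in>P \<Longrightarrow> Bs x Y \<inter> V x' = Bs (m x x') Y"
  unfolding Bs_def using V_Int[of x x'] by blast

lemma open_local:
  assumes "openin T U" "F \<in> U"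
  shows "\<exists>x Y. goodp (x,Y) \<and> F \<in> Bs x Y \<and> Bs x Y \<subseteq> U"
proof -
  have "generate_topology_on ({{F \<in> spec. x \<in> F} | x. x \<in> P} \<union> {{F \<in> spec. x \<notin> F} | x. x \<in> P}) U"
    using assms(1) unfolding tight_top_def by (rule openin_topology_generated_by)
  then show ?thesis using assms(2)
  proof (induction arbitrary: F)
    case Empty then show ?case by simp
  next
    case (Int a b)
    from Int.IH(1)[of F] Int.prems obtain x Y where 1: "goodp (x,Y)" "F \<in> Bs x Y" "Bs x Y \<subseteq> a" by blast
    from Int.IH(2)[of F] Int.prems obtain x' Y' where 2: "goodp (x',Y')" "F \<in> Bs x' Y'" "Bs x' Y' \<subseteq> b" by blast
    have "goodp (m x x', Y \<union> Y')" using 1 2 cl by (auto simp: goodp_def)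
    moreover have "Bs (m x x') (Y \<union> Y') = Bs x Y \<inter> Bs x' Y'" using 1 2 Bs_Int by (simp add: goodp_def)
    ultimately show ?case using 1 2 by blast
  next
    case (UN K)
    then obtain k where "k \<in> K" "F \<in> k" by blast
    with UN.IH[of k F] show ?case by blast
  next
    case (Basis s)
    then consider y where "y \<in> P" "s = {F \<in> spec. y \<in> F}" | y where "y \<in> P" "s = {F \<in> spec. y \<notin> F}"
      by blast
    then show ?case
    proof cases
      case 1
      then have "Bs y {} = s" by (auto simp: Bs_def Vset_def)
      then show ?thesis using 1 Basis.prems by (intro exI[of _ y] exI[of _ "{}"]) (auto simp: goodp_def)
    next
      case 2
      then have F: "F \<in> spec" "y \<notin> F" using Basis.prems by auto
      then obtain x where x: "x \<in> F" using specD(3) by blast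
      then have "x \<in> P" using specD(1)[OF F(1)] by blast
      have "F \<in> Bs x {y}" using F x by (auto simp: Bs_def Vset_def)
      moreover have "Bs x {y} \<subseteq> s" using 2 by (auto simp: Bs_def Vset_def)
      ultimately show ?thesis using 2 \<open>x\<in>P\<close> by (intro exI[of _ x] exI[of _ "{y}"]) (auto simp: goodp_def)
    qed
  qed
qed

lemma Tc_char:
  assumes "U \<in> Tcs"
  shows "\<exists>\<B>. finite \<B> \<and> (\<forall>p\<in>\<B>. goodp p) \<and> U = UB \<B>"
proof -
  define Q where "Q = {p. goodp p \<and> Bs (fst p) (snd p) \<subseteq> U}"
  define \<U> where "\<U> = (\<lambda>p. Bs (fst p) (snd p)) ` Q"
  have o: "\<forall>W\<in>\<U>. openin T W" unfolding \<U>_def Q_def using open_Bs by (auto simp: goodp_def)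
  have c: "U \<subseteq> \<Union>\<U>"
  proof
    fix F assume "F \<in> U"
    then obtain x Y where "goodp (x,Y)" "F \<in> Bs x Y" "Bs x Y \<subseteq> U"
      using open_local assms unfolding Tc_iff by blast
    then show "F \<in> \<Union>\<U>" unfolding \<U>_def Q_def by force
  qed
  obtain \<F> where \<F>: "finite \<F>" "\<F> \<subseteq> \<U>" "U \<subseteq> \<Union>\<F>"
    using assms o c unfolding Tc_iff compactin_def by meson
  then obtain \<B> where \<B>: "\<B> \<subseteq> Q" "finite \<B>" "\<F> = (\<lambda>p. Bs (fst p) (snd p)) ` \<B>"
    unfolding \<U>_def by (meson finite_subset_image)
  have "U = UB \<B>"
  proof
    show "U \<subseteq> UB \<B>" using \<F> \<B> unfolding UB_def by simp
    show "UB \<B> \<subseteq> U" using \<B> unfolding UB_def Q_def by auto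
  qed
  then show ?thesis using \<B> unfolding Q_def by blast
qed

lemma up_filter:
  assumes w: "w \<in> P" "w \<noteq> z"
  shows "is_filter P m z {y\<in>P. sle m w y}"
proof -
  let ?G = "{y\<in>P. sle m w y}"
  show ?thesis unfolding is_filter_def
  proof (intro conjI ballI impI)
    show "?G \<subseteq> P" by blast
    show "?G \<noteq> {}" using w sle_refl by blast
    show "z \<notin> ?G" using w sle_zD by blast
    fix a b assume "a \<in> ?G" "b \<in> P" "sle m a b"
    then show "b \<in> ?G" using sle_trans[of w a b] w by blast
  next
    fix a b assume "a \<in> ?G" "b \<in> ?G"
    then show "m a b \<in> ?G" using sle_glb[of a b w] w cl by blast
  qed
qed

lemma exists_tight:
  assumes w: "w \<in> P" "w \<noteq> z"
  shows "\<exists>F\<in>spec. w \<in> F"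
proof -
  define A where "A = {F. is_filter P m z F \<and> w \<in> F}"
  have "\<exists>M\<in>A. \<forall>X\<in>A. M \<subseteq> X \<longrightarrow> X = M"
  proof (rule Zorn_Lemma2, intro ballI)
    fix C assume C: "C \<in> chains A"
    show "\<exists>U\<in>A. \<forall>X\<in>C. X \<subseteq> U"
    proof (cases "C = {}")
      case True
      then show ?thesis using up_filter[OF w] w sle_refl unfolding A_def by blast
    next
      case False
      have CA: "C \<subseteq> A" using C by (rule chainsD2)
      have "is_filter P m z (\<Union>C)" unfolding is_filter_def
      proof (intro conjI ballI impI)
        show "\<Union>C \<subseteq> P" using CA unfolding A_def is_filter_def by blast
        show "\<Union>C \<noteq> {}" using CA False unfolding A_def by blast
        show "z \<notin> \<Union>C" using CA unfolding A_def is_filter_def by blast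
        fix a b assume "a \<in> \<Union>C" "b \<in> P" "sle m a b"
        then show "b \<in> \<Union>C" using CA unfolding A_def is_filter_def by blast
      next
        fix a b assume a: "a \<in> \<Union>C" and b: "b \<in> \<Union>C"
        then obtain Fa Fb where "Fa \<in> C" "Fb \<in> C" "a \<in> Fa" "b \<in> Fb" by blast
        moreover have "Fa \<subseteq> Fb \<or> Fb \<subseteq> Fa" using chainsD[OF C \<open>Fa\<in>C\<close> \<open>Fb\<in>C\<close>] .
        ultimately show "m a b \<in> \<Union>C" using CA unfolding A_def is_filter_def by blast
      qed
      then show ?thesis using CA False unfolding A_def by blast
    qed
  qed
  then obtain M where MA: "M \<in> A" and max: "\<And>X. X\<in>A \<Longrightarrow> M \<subseteq> X \<Longrightarrow> X = M" by blast
  have Mf: "is_filter P m z M" "w \<in> M" using MA unfolding A_def by blast+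
  have MP: "M \<subseteq> P" "z \<notin> M" using Mf unfolding is_filter_def by blast+
  have Mup: "\<And>a b. a \<in> M \<Longrightarrow> b \<in> P \<Longrightarrow> sle m a b \<Longrightarrow> b \<in> M"
    and Mmt: "\<And>a b. a \<in> M \<Longrightarrow> b \<in> M \<Longrightarrow> m a b \<in> M" using Mf unfolding is_filter_def by blast+
  have ultra: "\<exists>u\<in>M. m u y = z" if y: "y \<in> P" "y \<notin> M" for y
  proof (rule ccontr)
    assume nz: "\<not> (\<exists>u\<in>M. m u y = z)"
    define G where "G = {v\<in>P. \<exists>u\<in>M. sle m (m u y) v}"
    have MG: "M \<subseteq> G" unfolding G_def using MP sle_meet1 y by blast
    have "is_filter P m z G" unfolding is_filter_def
    proof (intro conjI ballI impI)
      show "G \<subseteq> P" unfolding G_def by blast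
      show "G \<noteq> {}" using MG Mf by blast
      show "z \<notin> G"
      proof
        assume "z \<in> G"
        then obtain u where u: "u \<in> M" "sle m (m u y) z" unfolding G_def by blast
        then have "m u y \<in> P" using MP y cl by blast
        then have "m u y = z" using sle_zD u by blast
        then show False using nz u by blast
      qed
      fix a b assume "a \<in> G" "b \<in> P" "sle m a b"
      then show "b \<in> G" unfolding G_def
      proof (clarify)
        fix u assume "a \<in> P" "b \<in> P" "sle m a b" "u \<in> M" "sle m (m u y) a"
        moreover have "m u y \<in> P" using \<open>u \<in> M\<close> MP y cl by blast
        ultimately show "\<exists>u\<in>M. sle m (m u y) b" using sle_trans[of "m u y" a b] by blast
      qed
    next
      fix a b assume "a \<in> G" "b \<in> G"
      then obtain u1 u2 where u: "u1 \<in> M" "u2 \<in> M" "sle m (m u1 y) a" "sle m (m u2 y) b" "a\<in>P" "b\<in>P"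
        unfolding G_def by blast
      have P12: "u1 \<in> P" "u2 \<in> P" using u MP by blast+
      have "sle m (m (m u1 u2) y) (m u1 y)"
        using sle_mono[of "m u1 u2" u1 y y] P12 y cl sle_meet1 sle_refl by blast
      moreover have "sle m (m (m u1 u2) y) (m u2 y)"
        using sle_mono[of "m u1 u2" u2 y y] P12 y cl sle_meet2 sle_refl by blast
      ultimately have "sle m (m (m u1 u2) y) (m a b)"
      proof -
        assume h1: "sle m (m (m u1 u2) y) (m u1 y)" and h2: "sle m (m (m u1 u2) y) (m u2 y)"
        have Q: "m (m u1 u2) y \<in> P" "m u1 y \<in> P" "m u2 y \<in> P" using P12 y cl by auto
        have "sle m (m (m u1 u2) y) a" using sle_trans[OF Q(1) Q(2) u(5) h1 u(3)] .
        moreover have "sle m (m (m u1 u2) y) b" using sle_trans[OF Q(1) Q(3) u(6) h2 u(4)] .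
        ultimately show ?thesis using sle_glb[OF u(5) u(6) Q(1)] by blast
      qed
      then show "m a b \<in> G" unfolding G_def using Mmt u cl by blast
    qed
    then have "G \<in> A" using MG Mf unfolding A_def by blast
    then have "G = M" using max MG by blast
    moreover have "y \<in> G" unfolding G_def using Mf(2) MP y sle_meet2 by blast
    ultimately show False using y by blast
  qed
  have fin: "finite C \<Longrightarrow> C \<subseteq> P - M \<Longrightarrow> \<exists>u\<in>M. \<forall>c\<in>C. m u c = z" for C
  proof (induction rule: finite_induct)
    case empty then show ?case using Mf by blast
  next
    case (insert c C)
    then obtain u where u: "u \<in> M" "\<forall>c\<in>C. m u c = z" by blast
    obtain uc where uc: "uc \<in> M" "m uc c = z" using ultra insert by blast
    have P: "u \<in> P" "uc \<in> P" "c \<in> P" "C \<subseteq> P" using u uc MP insert by auto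
    have "m (m u uc) c' = z" if "c' \<in> insert c C" for c'
    proof (cases "c' = c")
      case True then show ?thesis using P uc as zr by simp
    next
      case False then have "c' \<in> C" "c' \<in> P" using that P by auto
      then have "m (m u uc) c' = m uc (m u c')" using P by (simp add: cm[of u uc] as)
      then show ?thesis using u \<open>c' \<in> C\<close> P zr by simp
    qed
    then show ?case using Mmt u uc by blast
  qed
  have "tight_filter P m z M" unfolding tight_filter_def
  proof (intro conjI ballI allI impI Mf)
    fix x C assume x: "x \<in> M" and C: "is_cover P m z x C"
    show "C \<inter> M \<noteq> {}"
    proof
      assume CM: "C \<inter> M = {}"
      have Cfin: "finite C" "C \<subseteq> P" using C unfolding is_cover_def by blast+
      then obtain u where u: "u \<in> M" "\<forall>c\<in>C. m u c = z" using fin CM by blast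
      have xP: "x \<in> P" "u \<in> P" using x u MP by blast+
      have v: "m u x \<in> M" using Mmt u x by blast
      then have "m u x \<noteq> z" "m u x \<in> P" using MP by blast+
      moreover have "sle m (m u x) x" using sle_meet2 xP by blast
      ultimately obtain c where c: "c \<in> C" "m c (m u x) \<noteq> z" using C unfolding is_cover_def by blast
      have cP: "c \<in> P" using Cfin c by blast
      have "m c (m u x) = m (m c u) x" using xP cP by (simp add: as)
      also have "\<dots> = m (m u c) x" using xP cP by (simp add: cm[of c u])
      finally have "m c (m u x) = m (m u c) x" .
      then show False using c u xP zl by simp
    qed
  qed
  then show ?thesis using Mf unfolding tight_spec_def by blast
qed

lemma V_nonempty: "w \<in> P \<Longrightarrow> w \<noteq> z \<Longrightarrow> V w \<noteq> {}"
  using exists_tight unfolding Vset_def by blast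

definition J :: "'a set \<Rightarrow> 'a set set set" where
  "J D = {UB \<B> | \<B>. finite \<B> \<and> (\<forall>p\<in>\<B>. goodp p \<and> fst p \<in> D)}"

lemma UB_Un: "UB (A \<union> B) = UB A \<union> UB B" unfolding UB_def by blast

lemma J_Tc: "J D \<subseteq> Tcs" unfolding J_def using UB_Tc by blast

lemma J_ideal:
  assumes D: "D \<subseteq> P" "\<And>x y. x \<in> D \<Longrightarrow> y \<in> P \<Longrightarrow> sle m y x \<Longrightarrow> y \<in> D"
  shows "gba_ideal Tcs (J D)"
  unfolding gba_ideal_def
proof (intro conjI ballI impI J_Tc)
  show "{} \<in> J D" unfolding J_def UB_def by blast
  fix U W assume U: "U \<in> J D" and W: "W \<in> J D"
  obtain \<B>1 where B1: "finite \<B>1" "\<forall>p\<in>\<B>1. goodp p \<and> fst p \<in> D" "U = UB \<B>1" using U unfolding J_def by blast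
  obtain \<B>2 where B2: "finite \<B>2" "\<forall>p\<in>\<B>2. goodp p \<and> fst p \<in> D" "W = UB \<B>2" using W unfolding J_def by blast
  have "U \<union> W = UB (\<B>1 \<union> \<B>2)" using B1 B2 UB_Un by simp
  moreover have "finite (\<B>1 \<union> \<B>2)" "\<forall>p\<in>\<B>1 \<union> \<B>2. goodp p \<and> fst p \<in> D" using B1 B2 by auto
  ultimately show "U \<union> W \<in> J D" unfolding J_def by blast
next
  fix U W assume U: "U \<in> J D" and W: "W \<in> Tcs" and WU: "W \<subseteq> U"
  obtain \<B> where B: "finite \<B>" "\<forall>p\<in>\<B>. goodp p \<and> fst p \<in> D" "U = UB \<B>" using U unfolding J_def by blast
  obtain \<B>W where BW: "finite \<B>W" "\<forall>p\<in>\<B>W. goodp p" "W = UB \<B>W" using Tc_char[OF W] by blast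
  define f where "f = (\<lambda>r::('a \<times> 'a set) \<times> ('a \<times> 'a set). (m (fst (fst r)) (fst (snd r)), snd (fst r)))"
  define \<B>' where "\<B>' = f ` (\<B>W \<times> \<B>)"
  have fin: "finite \<B>'" unfolding \<B>'_def using B BW by simp
  have fqp: "fst (f (q,p)) = m (fst q) (fst p)" "snd (f (q,p)) = snd q" for q p by (simp_all add: f_def)
  have good: "\<forall>p\<in>\<B>'. goodp p \<and> fst p \<in> D"
  proof
    fix r assume "r \<in> \<B>'"
    then obtain q p where qp: "q \<in> \<B>W" "p \<in> \<B>" "r = f (q,p)" unfolding \<B>'_def by blast
    have q: "fst q \<in> P" "finite (snd q)" "snd q \<subseteq> P" using qp BW by (auto simp: goodp_def)
    have p: "fst p \<in> P" "fst p \<in> D" using qp B by (auto simp: goodp_def)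
    have "m (fst q) (fst p) \<in> D" using D(2)[OF p(2) cl[OF q(1) p(1)] sle_meet2[OF q(1) p(1)]] .
    moreover have "m (fst q) (fst p) \<in> P" using cl q p by blast
    ultimately show "goodp r \<and> fst r \<in> D" using qp q fqp by (simp add: goodp_def)
  qed
  have "W = UB \<B>'"
  proof
    show "W \<subseteq> UB \<B>'"
    proof
      fix F assume F: "F \<in> W"
      then obtain q where q: "q \<in> \<B>W" "F \<in> Bs (fst q) (snd q)" using BW unfolding UB_def by blast
      obtain p where p: "p \<in> \<B>" "F \<in> Bs (fst p) (snd p)" using F WU B unfolding UB_def by blast
      have P: "fst q \<in> P" "fst p \<in> P" using q p B BW by (auto simp: goodp_def)
      have "F \<in> Bs (fst q) (snd q) \<inter> V (fst p)" using p q by (auto simp: Bs_def)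
      then have "F \<in> Bs (m (fst q) (fst p)) (snd q)" using Bs_Vmeet[OF P] by simp
      then have "F \<in> Bs (fst (f (q,p))) (snd (f (q,p)))" by (simp add: fqp)
      moreover have "f (q,p) \<in> \<B>'" unfolding \<B>'_def using p q by blast
      ultimately show "F \<in> UB \<B>'" unfolding UB_def by blast
    qed
  next
    show "UB \<B>' \<subseteq> W"
    proof
      fix F assume "F \<in> UB \<B>'"
      then obtain r where r: "r \<in> \<B>'" "F \<in> Bs (fst r) (snd r)" unfolding UB_def by blast
      then obtain q p where qp: "q \<in> \<B>W" "p \<in> \<B>" "r = f (q,p)" unfolding \<B>'_def by blast
      have P: "fst q \<in> P" "fst p \<in> P" using qp B BW by (auto simp: goodp_def)
      have "F \<in> Bs (m (fst q) (fst p)) (snd q)" using r qp fqp by simp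
      then have "F \<in> Bs (fst q) (snd q)" using Bs_Vmeet[OF P, of "snd q"] by blast
      then show "F \<in> W" using BW qp unfolding UB_def by blast
    qed
  qed
  then show "W \<in> J D" unfolding J_def using fin good by blast
qed

lemma ideal_gen_J:
  assumes D: "D \<subseteq> P" "\<And>x y. x \<in> D \<Longrightarrow> y \<in> P \<Longrightarrow> sle m y x \<Longrightarrow> y \<in> D"
  shows "ideal_gen Tcs {V x | x. x \<in> D} = J D"
proof -
  have gens: "{V x | x. x \<in> D} \<subseteq> J D"
  proof
    fix U assume "U \<in> {V x | x. x \<in> D}"
    then obtain x where x: "x \<in> D" "U = V x" by blast
    have "UB {(x,{})} = V x" by (simp add: UB_def Bs_def)
    moreover have "finite {(x,{})} \<and> (\<forall>p\<in>{(x,{})}. goodp p \<and> fst p \<in> D)" using x D by (auto simp: goodp_def)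
    ultimately show "U \<in> J D" unfolding J_def using x by blast
  qed
  have sub: "J D \<subseteq> I" if I: "gba_ideal Tcs I" "{V x | x. x \<in> D} \<subseteq> I" for I
  proof
    fix U assume "U \<in> J D"
    then obtain \<B> where B: "finite \<B>" "\<forall>p\<in>\<B>. goodp p \<and> fst p \<in> D" "U = UB \<B>" unfolding J_def by blast
    have "\<forall>p\<in>\<B>. goodp p \<and> fst p \<in> D \<Longrightarrow> UB \<B> \<in> I" using B(1)
    proof (induction rule: finite_induct)
      case empty then show ?case using I unfolding gba_ideal_def UB_def by simp
    next
      case (insert p \<B>)
      have "V (fst p) \<in> I" using I insert by blast
      moreover have "Bs (fst p) (snd p) \<in> Tcs" using insert Bs_Tc by (simp add: goodp_def)
      moreover have "Bs (fst p) (snd p) \<subseteq> V (fst p)" by (simp add: Bs_def)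
      ultimately have "Bs (fst p) (snd p) \<in> I" using I unfolding gba_ideal_def by blast
      moreover have "UB (insert p \<B>) = Bs (fst p) (snd p) \<union> UB \<B>" unfolding UB_def by simp
      ultimately show ?case using insert I unfolding gba_ideal_def by simp
    qed
    then show "U \<in> I" using B by blast
  qed
  show ?thesis unfolding ideal_gen_def
  proof
    show "\<Inter>{I. gba_ideal Tcs I \<and> {V x | x. x \<in> D} \<subseteq> I} \<subseteq> J D"
      by (rule Inter_lower) (use J_ideal[OF D] gens in simp)
    show "J D \<subseteq> \<Inter>{I. gba_ideal Tcs I \<and> {V x | x. x \<in> D} \<subseteq> I}"
      by (rule Inter_greatest) (use sub in simp)
  qed
qed

lemma J_closed:
  assumes D: "D \<subseteq> P" "\<And>x y. x \<in> D \<Longrightarrow> y \<in> P \<Longrightarrow> sle m y x \<Longrightarrow> y \<in> D"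
    and U: "U \<in> J D" and W: "W \<in> J D"
  shows "U \<union> W \<in> J D" "U \<inter> W \<in> J D" "U - W \<in> J D"
proof -
  have I: "gba_ideal Tcs (J D)" using J_ideal[OF D] .
  have T: "U \<in> Tcs" "W \<in> Tcs" using U W J_Tc by blast+
  show "U \<union> W \<in> J D" using I U W unfolding gba_ideal_def by blast
  show "U \<inter> W \<in> J D" using I U Tc_Int[OF T] unfolding gba_ideal_def by blast
  show "U - W \<in> J D" using I U Tc_Diff[OF T] unfolding gba_ideal_def by blast
qed

end


context slat begin
lemma closed_neg: "y \<in> P \<Longrightarrow> closedin T {F \<in> spec. y \<notin> F}"
proof -
  assume y: "y \<in> P"
  have "topspace T - {F \<in> spec. y \<notin> F} = V y" unfolding topspace_T Vset_def by blast
  then show ?thesis unfolding closedin_def using open_V[OF y] topspace_T by auto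
qed

lemma spec_prod:
  assumes G: "G \<in> spec" and x0: "x0 \<in> G"
  shows "finite X \<Longrightarrow> X \<subseteq> G \<Longrightarrow> \<exists>x\<in>G. sle m x x0 \<and> (\<forall>x'\<in>X. sle m x x')"
proof (induction rule: finite_induct)
  case empty then show ?case using x0 specD(1)[OF G] sle_refl by blast
next
  case (insert a X)
  then obtain x where x: "x \<in> G" "sle m x x0" "\<forall>x'\<in>X. sle m x x'" by blast
  have aG: "a \<in> G" using insert by blast
  have P: "x \<in> P" "a \<in> P" "x0 \<in> P" using x aG x0 specD(1)[OF G] by auto
  have xa: "m x a \<in> G" using specD(5)[OF G x(1) aG] .
  have "sle m (m x a) x" "sle m (m x a) a" using sle_meet1 sle_meet2 P by auto
  moreover have "m x a \<in> P" using cl P by blast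
  ultimately have "sle m (m x a) x0" "\<forall>x'\<in>X. sle m (m x a) x'"
    using x sle_trans P insert.prems specD(1)[OF G] by (meson subsetD insert_subset)+
  then show ?case using xa \<open>sle m (m x a) a\<close> by blast
qed
end

locale sub2 = L1: slat P1 m z + L2: slat P2 m z for P1 P2 m z +
  assumes P12: "P1 \<subseteq> P2"
    and covers: "\<And>x C. x \<in> P1 \<Longrightarrow> is_cover P1 m z x C \<Longrightarrow> is_cover P2 m z x C"
begin

lemma restr_tight:
  assumes F: "F \<in> L2.spec" and ne: "F \<inter> P1 \<noteq> {}"
  shows "F \<inter> P1 \<in> L1.spec"
proof -
  have "is_filter P1 m z (F \<inter> P1)" unfolding is_filter_def
  proof (intro conjI ballI impI)
    show "F \<inter> P1 \<subseteq> P1" by blast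
    show "F \<inter> P1 \<noteq> {}" by fact
    show "z \<notin> F \<inter> P1" using L2.specD(2)[OF F] by blast
    fix a b assume "a \<in> F \<inter> P1" "b \<in> P1" "sle m a b"
    then show "b \<in> F \<inter> P1" using L2.specD(4)[OF F] P12 by blast
  next
    fix a b assume "a \<in> F \<inter> P1" "b \<in> F \<inter> P1"
    then show "m a b \<in> F \<inter> P1" using L2.specD(5)[OF F] L1.cl by blast
  qed
  moreover have "C \<inter> (F \<inter> P1) \<noteq> {}" if "x \<in> F \<inter> P1" "is_cover P1 m z x C" for x C
  proof -
    have "is_cover P2 m z x C" using covers that by blast
    then have "C \<inter> F \<noteq> {}" using L2.specD(6)[OF F] that by blast
    moreover have "C \<subseteq> P1" using that(2) by (simp add: is_cover_def)
    ultimately show ?thesis by blast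
  qed
  ultimately show ?thesis unfolding tight_spec_def tight_filter_def by blast
qed

lemma restr_surj:
  assumes G: "G \<in> L1.spec"
  shows "\<exists>F\<in>L2.spec. F \<inter> P1 = G"
proof -
  obtain x0 where x0: "x0 \<in> G" using L1.specD(3)[OF G] by blast
  have GP: "G \<subseteq> P1" using L1.specD(1)[OF G] .
  have x0P: "x0 \<in> P1" "x0 \<in> P2" using x0 GP P12 by auto
  define N where "N y = {F \<in> L2.spec. y \<notin> F}" for y
  define \<U> where "\<U> = L2.V ` G \<union> N ` (P1 - G)"
  have cpt: "compactin L2.T (L2.V x0)" using L2.compact_V[OF x0P(2)] .
  have closed: "\<forall>C\<in>\<U>. closedin L2.T C"
  proof
    fix C assume "C \<in> \<U>"
    then consider x where "x \<in> G" "C = L2.V x" | y where "y \<in> P1 - G" "C = N y" unfolding \<U>_def by blast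
    then show "closedin L2.T C"
    proof cases
      case 1 then show ?thesis using L2.closed_V GP P12 by blast
    next
      case 2 then show ?thesis unfolding N_def using L2.closed_neg P12 by blast
    qed
  qed
  have fip: "L2.V x0 \<inter> \<Inter>\<F> \<noteq> {}" if F: "finite \<F>" "\<F> \<subseteq> \<U>" for \<F>
  proof -
    have F1: "finite (\<F> \<inter> L2.V ` G)" "\<F> \<inter> L2.V ` G \<subseteq> L2.V ` G" using F by auto
    obtain X0 where X0: "X0 \<subseteq> G" "finite X0" "\<F> \<inter> L2.V ` G = L2.V ` X0"
      using finite_subset_image[OF F1] by blast
    have F2: "finite (\<F> \<inter> N ` (P1 - G))" "\<F> \<inter> N ` (P1 - G) \<subseteq> N ` (P1 - G)" using F by auto
    obtain Y0 where Y0: "Y0 \<subseteq> P1 - G" "finite Y0" "\<F> \<inter> N ` (P1 - G) = N ` Y0"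
      using finite_subset_image[OF F2] by blast
    have "\<F> = (\<F> \<inter> L2.V ` G) \<union> (\<F> \<inter> N ` (P1 - G))" using F(2) unfolding \<U>_def by blast
    then have Fsplit: "\<F> = L2.V ` X0 \<union> N ` Y0" using X0(3) Y0(3) by simp
    obtain x where x: "x \<in> G" "sle m x x0" "\<forall>x'\<in>X0. sle m x x'"
      using L1.spec_prod[OF G x0 X0(2) X0(1)] by blast
    have xP: "x \<in> P1" using x GP by blast
    define C where "C = (\<lambda>y. m x y) ` Y0"
    have notcov: "\<not> is_cover P1 m z x C"
    proof
      assume "is_cover P1 m z x C"
      then have "C \<inter> G \<noteq> {}" using L1.specD(6)[OF G x(1)] by blast
      then obtain y where y: "y \<in> Y0" "m x y \<in> G" unfolding C_def by blast
      have "y \<in> P1" using y Y0 by blast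
      then have "y \<in> G" using L1.spec_meet[OF G xP] y by blast
      then show False using y Y0 by blast
    qed
    have Cgood: "finite C" "C \<subseteq> P1" "\<forall>c\<in>C. sle m c x"
      unfolding C_def using Y0 xP L1.cl L1.sle_meet1 by auto
    obtain w where w: "w \<in> P1" "w \<noteq> z" "sle m w x" "\<forall>c\<in>C. m c w = z"
      using notcov Cgood unfolding is_cover_def by blast
    obtain F0 where F0: "F0 \<in> L2.spec" "w \<in> F0" using L2.exists_tight[of w] w P12 by blast
    have xF: "x \<in> F0" using L2.specD(4)[OF F0(1) F0(2)] w xP P12 by blast
    have "F0 \<in> L2.V x0" using L2.specD(4)[OF F0(1) xF] x0P x(2) F0 unfolding Vset_def by blast
    moreover have "F0 \<in> L2.V x'" if "x' \<in> X0" for x'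
      using L2.specD(4)[OF F0(1) xF] x(3) that X0 GP P12 F0 unfolding Vset_def by blast
    moreover have "F0 \<in> N y" if "y \<in> Y0" for y
    proof -
      have "y \<notin> F0"
      proof
        assume "y \<in> F0"
        then have "m (m x y) w \<in> F0" using L2.specD(5)[OF F0(1)] xF F0(2) by blast
        moreover have "m (m x y) w = z" using w that unfolding C_def by blast
        ultimately show False using L2.specD(2)[OF F0(1)] by simp
      qed
      then show ?thesis unfolding N_def using F0 by blast
    qed
    ultimately have "F0 \<in> L2.V x0 \<inter> \<Inter>\<F>" unfolding Fsplit by blast
    then show ?thesis by blast
  qed
  have "\<forall>\<U>. (\<forall>C\<in>\<U>. closedin L2.T C) \<and> (\<forall>\<F>. finite \<F> \<and> \<F> \<subseteq> \<U> \<longrightarrow> L2.V x0 \<inter> \<Inter>\<F> \<noteq> {}) \<longrightarrow> L2.V x0 \<inter> \<Inter>\<U> \<noteq> {}"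
    using cpt unfolding compactin_fip by (rule conjunct2)
  then have "L2.V x0 \<inter> \<Inter>\<U> \<noteq> {}" using closed fip by blast
  then obtain F where F: "F \<in> L2.V x0" "F \<in> \<Inter>\<U>" by blast
  have FS: "F \<in> L2.spec" using F(1) unfolding Vset_def by blast
  have "G \<subseteq> F" using F(2) unfolding \<U>_def Vset_def by blast
  moreover have "F \<inter> (P1 - G) = {}" using F(2) unfolding \<U>_def N_def by blast
  ultimately have "F \<inter> P1 = G" using GP by blast
  then show ?thesis using FS by blast
qed

definition hi :: "'a set set \<Rightarrow> 'a set set" where
  "hi U = (if U \<in> L1.Tcs then {F \<in> L2.spec. F \<inter> P1 \<in> U} else {})"

lemma pre_Bs:
  assumes "x \<in> P1" "Y \<subseteq> P1"
  shows "{F \<in> L2.spec. F \<inter> P1 \<in> L1.Bs x Y} = L2.Bs x Y"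
proof
  show "{F \<in> L2.spec. F \<inter> P1 \<in> L1.Bs x Y} \<subseteq> L2.Bs x Y"
    using assms unfolding L1.Bs_def L2.Bs_def Vset_def by blast
  show "L2.Bs x Y \<subseteq> {F \<in> L2.spec. F \<inter> P1 \<in> L1.Bs x Y}"
  proof
    fix F assume F: "F \<in> L2.Bs x Y"
    then have FS: "F \<in> L2.spec" "x \<in> F" "\<forall>y\<in>Y. y \<notin> F" unfolding L2.Bs_def Vset_def by blast+
    then have "F \<inter> P1 \<in> L1.spec" using restr_tight assms by blast
    then show "F \<in> {F \<in> L2.spec. F \<inter> P1 \<in> L1.Bs x Y}"
      using FS assms unfolding L1.Bs_def Vset_def by blast
  qed
qed

lemma pre_UB:
  assumes "\<forall>p\<in>\<B>. L1.goodp p"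
  shows "{F \<in> L2.spec. F \<inter> P1 \<in> L1.UB \<B>} = L2.UB \<B>"
proof -
  have "{F \<in> L2.spec. F \<inter> P1 \<in> L1.UB \<B>} = (\<Union>p\<in>\<B>. {F \<in> L2.spec. F \<inter> P1 \<in> L1.Bs (fst p) (snd p)})"
    unfolding L1.UB_def by blast
  also have "\<dots> = (\<Union>p\<in>\<B>. L2.Bs (fst p) (snd p))"
    using pre_Bs assms unfolding L1.goodp_def by simp
  finally show ?thesis unfolding L2.UB_def .
qed

lemma good12: "L1.goodp p \<Longrightarrow> L2.goodp p"
  unfolding L1.goodp_def L2.goodp_def using P12 by blast

definition ipred where
  "ipred h \<longleftrightarrow> inj_on h L1.Tcs \<and> h ` L1.Tcs \<subseteq> L2.Tcs \<and> gba_hom L1.Tcs h \<and>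
       (\<forall>x\<in>P1. h (L1.V x) = L2.V x) \<and> (\<forall>U. U \<notin> L1.Tcs \<longrightarrow> h U = {})"

lemma ipred_det:
  assumes h: "ipred h" and B: "finite \<B>" "\<forall>p\<in>\<B>. L1.goodp p"
  shows "h (L1.UB \<B>) = L2.UB \<B>"
proof -
  have hom: "gba_hom L1.Tcs h" and hV: "\<forall>x\<in>P1. h (L1.V x) = L2.V x" using h unfolding ipred_def by blast+
  have un: "\<And>U W. U \<in> L1.Tcs \<Longrightarrow> W \<in> L1.Tcs \<Longrightarrow> U \<union> W \<in> L1.Tcs" using L1.Tc_Un by blast
  have sub: "(\<lambda>p. L1.Bs (fst p) (snd p)) ` \<B> \<subseteq> L1.Tcs"
  proof
    fix X assume "X \<in> (\<lambda>p. L1.Bs (fst p) (snd p)) ` \<B>"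
    then obtain p where "p \<in> \<B>" "X = L1.Bs (fst p) (snd p)" by blast
    then show "X \<in> L1.Tcs" using L1.Bs_Tc B(2) unfolding L1.goodp_def by blast
  qed
  have fin: "finite ((\<lambda>p. L1.Bs (fst p) (snd p)) ` \<B>)" using B(1) by simp
  have "h (L1.UB \<B>) = \<Union>(h ` ((\<lambda>p. L1.Bs (fst p) (snd p)) ` \<B>))"
    unfolding L1.UB_def using hom_Union[OF hom L1.Tc_empty un fin sub] by (rule conjunct1)
  also have "\<dots> = (\<Union>p\<in>\<B>. L2.Bs (fst p) (snd p))"
    unfolding image_image
  proof (rule SUP_cong[OF refl])
    fix p assume p: "p \<in> \<B>"
    then have g: "fst p \<in> P1" "finite (snd p)" "snd p \<subseteq> P1" using B unfolding L1.goodp_def by auto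
    have s2: "L1.V ` snd p \<subseteq> L1.Tcs" using g(3) L1.V_Tc by blast
    have "h (L1.Bs (fst p) (snd p)) = h (L1.V (fst p)) - \<Union>(h ` L1.V ` snd p)"
      unfolding L1.Bs_def
      by (rule hom_Diff_Union[OF hom L1.Tc_empty un finite_imageI[OF g(2)] s2 L1.V_Tc[OF g(1)]])
    also have "h ` L1.V ` snd p = L2.V ` snd p" unfolding image_image
      using hV g(3) by (intro image_cong) auto
    also have "h (L1.V (fst p)) = L2.V (fst p)" using hV g(1) by blast
    finally show "h (L1.Bs (fst p) (snd p)) = L2.Bs (fst p) (snd p)" unfolding L2.Bs_def .
  qed
  finally show ?thesis unfolding L2.UB_def by simp
qed

lemma ipred_hi: "ipred hi"
  unfolding ipred_def
proof (intro conjI ballI allI impI)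
  show "inj_on hi L1.Tcs"
  proof (rule inj_onI)
    fix U W assume U: "U \<in> L1.Tcs" and W: "W \<in> L1.Tcs" and eq: "hi U = hi W"
    have "U \<subseteq> W" if U: "U \<in> L1.Tcs" and W: "W \<in> L1.Tcs" and eq: "hi U = hi W" for U W
    proof
      fix G assume "G \<in> U"
      then have "G \<in> L1.spec" using L1.Tc_sub U by blast
      then obtain F where F: "F \<in> L2.spec" "F \<inter> P1 = G" using restr_surj by blast
      then have "F \<in> hi U" using \<open>G \<in> U\<close> U unfolding hi_def by simp
      then have "F \<in> hi W" using eq by simp
      then show "G \<in> W" using W F unfolding hi_def by simp
    qed
    then show "U = W" using U W eq by blast
  qed
  show "hi ` L1.Tcs \<subseteq> L2.Tcs"
  proof
    fix X assume "X \<in> hi ` L1.Tcs"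
    then obtain U where U: "U \<in> L1.Tcs" "X = hi U" by blast
    obtain \<B> where B: "finite \<B>" "\<forall>p\<in>\<B>. L1.goodp p" "U = L1.UB \<B>" using L1.Tc_char[OF U(1)] by blast
    have "X = L2.UB \<B>" using U B pre_UB unfolding hi_def by simp
    then show "X \<in> L2.Tcs" using L2.UB_Tc B good12 by blast
  qed
  show "gba_hom L1.Tcs hi" unfolding gba_hom_def
  proof (intro ballI conjI)
    fix U W assume U: "U \<in> L1.Tcs" and W: "W \<in> L1.Tcs"
    have c: "U \<union> W \<in> L1.Tcs" "U \<inter> W \<in> L1.Tcs" "U - W \<in> L1.Tcs"
      using L1.Tc_Un L1.Tc_Int L1.Tc_Diff U W by auto
    show "hi (U \<union> W) = hi U \<union> hi W" using U W c unfolding hi_def by auto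
    show "hi (U \<inter> W) = hi U \<inter> hi W" using U W c unfolding hi_def by auto
    show "hi (U - W) = hi U - hi W" using U W c unfolding hi_def by auto
  qed
  fix x assume x: "x \<in> P1"
  have "L1.V x = L1.Bs x {}" "L2.V x = L2.Bs x {}" unfolding L1.Bs_def L2.Bs_def by simp_all
  moreover have "L1.V x \<in> L1.Tcs" using L1.V_Tc x by blast
  ultimately show "hi (L1.V x) = L2.V x" using pre_Bs[of x "{}"] x unfolding hi_def by simp
next
  fix U assume "U \<notin> L1.Tcs" then show "hi U = {}" unfolding hi_def by simp
qed

lemma ipred_unique: "ipred h \<Longrightarrow> h = hi"
proof
  fix U assume h: "ipred h"
  show "h U = hi U"
  proof (cases "U \<in> L1.Tcs")
    case True
    obtain \<B> where B: "finite \<B>" "\<forall>p\<in>\<B>. L1.goodp p" "U = L1.UB \<B>" using L1.Tc_char[OF True] by blast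
    show ?thesis using ipred_det[OF h B(1,2)] ipred_det[OF ipred_hi B(1,2)] B(3) by simp
  next
    case False then show ?thesis using h ipred_hi unfolding ipred_def by simp
  qed
qed

lemma THE_ipred: "(THE h. ipred h) = hi"
  using ipred_hi ipred_unique by (rule the_equality)

end


definition thetaf :: "'a set \<Rightarrow> ('a\<Rightarrow>'a\<Rightarrow>'a) \<Rightarrow> 'a set \<Rightarrow> ('a \<Rightarrow> 'a) \<Rightarrow> 'a set \<Rightarrow> 'a set" where
  "thetaf P m D \<alpha> F = {w\<in>P. \<exists>x\<in>F \<inter> D. sle m (\<alpha> x) w}"

locale pmap = slat P m z for P m z +
  fixes D1 D2 :: "'a set" and \<alpha> \<beta> :: "'a \<Rightarrow> 'a"
  assumes D1P: "D1 \<subseteq> P" and D2P: "D2 \<subseteq> P"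
    and down1: "x \<in> D1 \<Longrightarrow> y \<in> P \<Longrightarrow> sle m y x \<Longrightarrow> y \<in> D1"
    and down2: "x \<in> D2 \<Longrightarrow> y \<in> P \<Longrightarrow> sle m y x \<Longrightarrow> y \<in> D2"
    and \<alpha>D: "x \<in> D1 \<Longrightarrow> \<alpha> x \<in> D2" and \<beta>D: "y \<in> D2 \<Longrightarrow> \<beta> y \<in> D1"
    and \<beta>\<alpha>: "x \<in> D1 \<Longrightarrow> \<beta> (\<alpha> x) = x" and \<alpha>\<beta>: "y \<in> D2 \<Longrightarrow> \<alpha> (\<beta> y) = y"
    and \<alpha>mono: "x \<in> D1 \<Longrightarrow> y \<in> D1 \<Longrightarrow> sle m x y \<Longrightarrow> sle m (\<alpha> x) (\<alpha> y)"
    and \<beta>mono: "x \<in> D2 \<Longrightarrow> y \<in> D2 \<Longrightarrow> sle m x y \<Longrightarrow> sle m (\<beta> x) (\<beta> y)"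
begin

lemma pmap_sym: "pmap P m z D2 D1 \<beta> \<alpha>"
proof (intro pmap.intro slat_axioms pmap_axioms.intro)
  show "D2 \<subseteq> P" by (rule D2P)
  show "D1 \<subseteq> P" by (rule D1P)
  fix x y
  show "x \<in> D2 \<Longrightarrow> y \<in> P \<Longrightarrow> sle m y x \<Longrightarrow> y \<in> D2" by (rule down2)
  show "x \<in> D1 \<Longrightarrow> y \<in> P \<Longrightarrow> sle m y x \<Longrightarrow> y \<in> D1" by (rule down1)
  show "x \<in> D2 \<Longrightarrow> \<beta> x \<in> D1" by (rule \<beta>D)
  show "y \<in> D1 \<Longrightarrow> \<alpha> y \<in> D2" by (rule \<alpha>D)
  show "x \<in> D2 \<Longrightarrow> \<alpha> (\<beta> x) = x" by (rule \<alpha>\<beta>)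
  show "y \<in> D1 \<Longrightarrow> \<beta> (\<alpha> y) = y" by (rule \<beta>\<alpha>)
  show "x \<in> D2 \<Longrightarrow> y \<in> D2 \<Longrightarrow> sle m x y \<Longrightarrow> sle m (\<beta> x) (\<beta> y)" by (rule \<beta>mono)
  show "x \<in> D1 \<Longrightarrow> y \<in> D1 \<Longrightarrow> sle m x y \<Longrightarrow> sle m (\<alpha> x) (\<alpha> y)" by (rule \<alpha>mono)
qed

abbreviation "\<theta> \<equiv> thetaf P m D1 \<alpha>"
abbreviation "\<theta>' \<equiv> thetaf P m D2 \<beta>"

lemma D1_meet: "x \<in> D1 \<Longrightarrow> y \<in> P \<Longrightarrow> m x y \<in> D1"
proof -
  assume x: "x \<in> D1" and y: "y \<in> P"
  have xP: "x \<in> P" using x D1P by blast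
  show "m x y \<in> D1" using down1[OF x cl[OF xP y] sle_meet1[OF xP y]] .
qed

lemma \<alpha>_meet:
  assumes x: "x \<in> D1" and y: "y \<in> D1"
  shows "\<alpha> (m x y) = m (\<alpha> x) (\<alpha> y)"
proof -
  have P: "x \<in> P" "y \<in> P" using x y D1P by auto
  have xy: "m x y \<in> D1" using D1_meet x P by blast
  have aP: "\<alpha> x \<in> P" "\<alpha> y \<in> P" "\<alpha> (m x y) \<in> P" using \<alpha>D x y xy D2P by auto
  have 1: "sle m (\<alpha> (m x y)) (\<alpha> x)" using \<alpha>mono[OF xy x sle_meet1[OF P]] .
  have 2: "sle m (\<alpha> (m x y)) (\<alpha> y)" using \<alpha>mono[OF xy y sle_meet2[OF P]] .
  have a: "sle m (\<alpha> (m x y)) (m (\<alpha> x) (\<alpha> y))" using sle_glb[OF aP 1 2] .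
  define c where "c = m (\<alpha> x) (\<alpha> y)"
  have cP: "c \<in> P" unfolding c_def using cl aP by blast
  have cD: "c \<in> D2" unfolding c_def using down2[OF \<alpha>D[OF x] cl[OF aP(1,2)] sle_meet1[OF aP(1,2)]] .
  have bcx: "sle m (\<beta> c) x" using \<beta>mono[OF cD \<alpha>D[OF x]] sle_meet1[OF aP(1,2)] \<beta>\<alpha>[OF x] unfolding c_def by simp
  have bcy: "sle m (\<beta> c) y" using \<beta>mono[OF cD \<alpha>D[OF y]] sle_meet2[OF aP(1,2)] \<beta>\<alpha>[OF y] unfolding c_def by simp
  have bcD: "\<beta> c \<in> D1" using \<beta>D[OF cD] .
  have "sle m (\<beta> c) (m x y)" using sle_glb[OF P _ bcx bcy] bcD D1P by blast
  then have "sle m (\<alpha> (\<beta> c)) (\<alpha> (m x y))" using \<alpha>mono[OF bcD xy] by blast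
  then have b: "sle m c (\<alpha> (m x y))" using \<alpha>\<beta>[OF cD] by simp
  show ?thesis using sle_antisym[OF aP(3) cP a[folded c_def] b] unfolding c_def .
qed

lemma z_D1: "x \<in> D1 \<Longrightarrow> z \<in> D1" using down1 zP sle_z D1P by blast

lemma \<alpha>_z: assumes "z \<in> D1" shows "\<alpha> z = z"
proof -
  have azD: "\<alpha> z \<in> D2" using \<alpha>D assms .
  have zD2: "z \<in> D2" using down2[OF azD zP sle_z] azD D2P by blast
  have "sle m (\<beta> z) (\<beta> (\<alpha> z))" using \<beta>mono[OF zD2 azD sle_z] azD D2P by blast
  then have "sle m (\<beta> z) z" using \<beta>\<alpha>[OF assms] by simp
  then have "\<beta> z = z" using sle_zD \<beta>D[OF zD2] D1P by blast
  then show ?thesis using \<alpha>\<beta>[OF zD2] by simp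
qed

lemma \<alpha>_zero: assumes x: "x \<in> D1" shows "\<alpha> x = z \<longleftrightarrow> x = z"
proof
  assume "\<alpha> x = z"
  then have "\<beta> z = x" using \<beta>\<alpha>[OF x] by simp
  moreover have "\<beta> z = z" using \<beta>\<alpha>[OF z_D1[OF x]] \<alpha>_z[OF z_D1[OF x]] by simp
  ultimately show "x = z" by simp
next
  assume "x = z" then show "\<alpha> x = z" using \<alpha>_z x by simp
qed

lemma theta_mem:
  assumes F: "F \<in> spec" and y: "y \<in> D1"
  shows "\<alpha> y \<in> \<theta> F \<longleftrightarrow> y \<in> F"
proof
  assume "\<alpha> y \<in> \<theta> F"
  then obtain x where x: "x \<in> F" "x \<in> D1" "sle m (\<alpha> x) (\<alpha> y)" unfolding thetaf_def by blast
  have "sle m (\<beta> (\<alpha> x)) (\<beta> (\<alpha> y))" using \<beta>mono[OF \<alpha>D[OF x(2)] \<alpha>D[OF y] x(3)] .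
  then have "sle m x y" using \<beta>\<alpha> x y by simp
  then show "y \<in> F" using specD(4)[OF F x(1)] y D1P by blast
next
  assume "y \<in> F"
  moreover have "\<alpha> y \<in> P" using \<alpha>D[OF y] D2P by blast
  ultimately show "\<alpha> y \<in> \<theta> F" unfolding thetaf_def using y sle_refl by blast
qed

lemma theta_spec:
  assumes F: "F \<in> spec" and ne: "F \<inter> D1 \<noteq> {}"
  shows "\<theta> F \<in> spec"
proof -
  obtain x0 where x0: "x0 \<in> F" "x0 \<in> D1" using ne by blast
  have filt: "is_filter P m z (\<theta> F)" unfolding is_filter_def
  proof (intro conjI ballI impI)
    show "\<theta> F \<subseteq> P" unfolding thetaf_def by blast
    show "\<theta> F \<noteq> {}" using theta_mem[OF F x0(2)] x0 by blast
    show "z \<notin> \<theta> F"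
    proof
      assume "z \<in> \<theta> F"
      then obtain x where x: "x \<in> F" "x \<in> D1" "sle m (\<alpha> x) z" unfolding thetaf_def by blast
      then have "\<alpha> x = z" using sle_zD \<alpha>D D2P by blast
      then have "x = z" using \<alpha>_zero x by blast
      then show False using x specD(2)[OF F] by blast
    qed
    fix a b assume "a \<in> \<theta> F" "b \<in> P" "sle m a b"
    then show "b \<in> \<theta> F" unfolding thetaf_def
    proof (clarify)
      fix x assume h: "a \<in> P" "b \<in> P" "sle m a b" "x \<in> F" "x \<in> D1" "sle m (\<alpha> x) a"
      have "\<alpha> x \<in> P" using \<alpha>D[OF h(5)] D2P by blast
      then have "sle m (\<alpha> x) b" using sle_trans[OF _ h(1) h(2) h(6) h(3)] by blast
      then show "\<exists>x\<in>F \<inter> D1. sle m (\<alpha> x) b" using h by blast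
    qed
  next
    fix a b assume a: "a \<in> \<theta> F" and b: "b \<in> \<theta> F"
    then obtain x1 x2 where x: "x1 \<in> F" "x1 \<in> D1" "sle m (\<alpha> x1) a" "x2 \<in> F" "x2 \<in> D1" "sle m (\<alpha> x2) b"
      "a \<in> P" "b \<in> P" unfolding thetaf_def by blast
    have x12: "m x1 x2 \<in> F" "m x1 x2 \<in> D1" using specD(5)[OF F x(1) x(4)] D1_meet x D1P by auto
    have aP: "\<alpha> x1 \<in> P" "\<alpha> x2 \<in> P" using \<alpha>D x D2P by auto
    have "sle m (m (\<alpha> x1) (\<alpha> x2)) (m a b)" using sle_mono[OF aP(1) x(7) aP(2) x(8) x(3) x(6)] .
    then have "sle m (\<alpha> (m x1 x2)) (m a b)" using \<alpha>_meet x by simp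
    then show "m a b \<in> \<theta> F" unfolding thetaf_def using x12 cl x by blast
  qed
  have "C \<inter> \<theta> F \<noteq> {}" if w: "w \<in> \<theta> F" and C: "is_cover P m z w C" for w C
  proof -
    obtain x where x: "x \<in> F" "x \<in> D1" "sle m (\<alpha> x) w" and wP: "w \<in> P" using w unfolding thetaf_def by blast
    have xP: "x \<in> P" "\<alpha> x \<in> P" "\<alpha> x \<in> D2" using x D1P \<alpha>D D2P by auto
    have Cfin: "finite C" "C \<subseteq> P" using C unfolding is_cover_def by auto
    have cD: "m c (\<alpha> x) \<in> D2" if "c \<in> C" for c
      using down2[OF xP(3) cl[OF _ xP(2)] sle_meet2[OF _ xP(2)]] that Cfin by blast
    define C' where "C' = (\<lambda>c. \<beta> (m c (\<alpha> x))) ` C"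
    have "is_cover P m z x C'" unfolding is_cover_def
    proof (intro conjI ballI impI)
      show "finite C'" unfolding C'_def using Cfin by simp
      show "C' \<subseteq> P" unfolding C'_def using cD \<beta>D D1P by blast
    next
      fix b assume "b \<in> C'"
      then obtain c where c: "c \<in> C" "b = \<beta> (m c (\<alpha> x))" unfolding C'_def by blast
      have "sle m (m c (\<alpha> x)) (\<alpha> x)" using sle_meet2 c Cfin xP by blast
      then have "sle m b (\<beta> (\<alpha> x))" using \<beta>mono[OF cD[OF c(1)] xP(3)] c by simp
      then show "sle m b x" using \<beta>\<alpha>[OF x(2)] by simp
    next
      fix y assume y: "y \<in> P" "y \<noteq> z \<and> sle m y x"
      have yD: "y \<in> D1" using down1[OF x(2)] y by blast
      have ay: "\<alpha> y \<in> P" "\<alpha> y \<noteq> z" "\<alpha> y \<in> D2" using \<alpha>D[OF yD] D2P \<alpha>_zero[OF yD] y by auto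
      have "sle m (\<alpha> y) (\<alpha> x)" using \<alpha>mono[OF yD x(2)] y by blast
      then have ayw: "sle m (\<alpha> y) w" using sle_trans[OF ay(1) xP(2) wP _ x(3)] by blast
      obtain c where c: "c \<in> C" "m c (\<alpha> y) \<noteq> z" using C ay ayw unfolding is_cover_def by blast
      have cP: "c \<in> P" using c Cfin by blast
      define b where "b = \<beta> (m c (\<alpha> x))"
      have bD: "b \<in> D1" unfolding b_def using \<beta>D cD c by blast
      have "\<alpha> (m b y) = m (\<alpha> b) (\<alpha> y)" using \<alpha>_meet[OF bD yD] .
      also have "\<alpha> b = m c (\<alpha> x)" unfolding b_def using \<alpha>\<beta> cD c by blast
      also have "m (m c (\<alpha> x)) (\<alpha> y) = m c (m (\<alpha> x) (\<alpha> y))" using cP xP ay by (simp add: as)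
      also have "m (\<alpha> x) (\<alpha> y) = \<alpha> y"
      proof -
        have "m (\<alpha> y) (\<alpha> x) = \<alpha> y" using \<open>sle m (\<alpha> y) (\<alpha> x)\<close> unfolding sle_def .
        then show ?thesis using cm[OF xP(2) ay(1)] by simp
      qed
      finally have "\<alpha> (m b y) = m c (\<alpha> y)" .
      then have "m b y \<noteq> z" using c \<alpha>_z z_D1[OF yD] by auto
      moreover have "b \<in> C'" unfolding C'_def b_def using c by blast
      ultimately show "\<exists>c\<in>C'. m c y \<noteq> z" by blast
    qed
    then obtain b where b: "b \<in> C'" "b \<in> F" using specD(6)[OF F x(1)] by blast
    then obtain c where c: "c \<in> C" "b = \<beta> (m c (\<alpha> x))" unfolding C'_def by blast
    have bD: "b \<in> D1" using c cD \<beta>D by blast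
    have "\<alpha> b = m c (\<alpha> x)" using c \<alpha>\<beta> cD by blast
    then have "sle m (\<alpha> b) c" using sle_meet1 c Cfin xP by auto
    then have "c \<in> \<theta> F" unfolding thetaf_def using b bD c Cfin by blast
    then show ?thesis using c by blast
  qed
  then show ?thesis using filt unfolding tight_spec_def tight_filter_def by blast
qed

end



context pmap begin

lemma theta_D2: "F \<in> spec \<Longrightarrow> x \<in> F \<Longrightarrow> x \<in> D1 \<Longrightarrow> \<alpha> x \<in> \<theta> F \<inter> D2"
  using theta_mem \<alpha>D by blast

lemma theta_inv:
  assumes F: "F \<in> spec" and ne: "F \<inter> D1 \<noteq> {}"
  shows "\<theta>' (\<theta> F) = F"
proof
  show "\<theta>' (\<theta> F) \<subseteq> F"
  proof
    fix v assume "v \<in> \<theta>' (\<theta> F)"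
    then obtain w where w: "v \<in> P" "w \<in> \<theta> F" "w \<in> D2" "sle m (\<beta> w) v" unfolding thetaf_def by blast
    have "\<alpha> (\<beta> w) \<in> \<theta> F" using w \<alpha>\<beta> by simp
    then have "\<beta> w \<in> F" using theta_mem[OF F \<beta>D[OF w(3)]] by blast
    then show "v \<in> F" using specD(4)[OF F] w by blast
  qed
  show "F \<subseteq> \<theta>' (\<theta> F)"
  proof
    fix v assume v: "v \<in> F"
    obtain x where x: "x \<in> F" "x \<in> D1" using ne by blast
    have vP: "v \<in> P" using v specD(1)[OF F] by blast
    have xP: "x \<in> P" using x D1P by blast
    have vx: "m v x \<in> F" "m v x \<in> D1" using specD(5)[OF F v x(1)] D1_meet[OF x(2) vP] cm[OF vP xP] by auto
    have "\<alpha> (m v x) \<in> \<theta> F \<inter> D2" using theta_D2[OF F vx] .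
    moreover have "\<beta> (\<alpha> (m v x)) = m v x" using \<beta>\<alpha> vx by blast
    moreover have "sle m (m v x) v" using sle_meet1 vP x D1P by blast
    ultimately show "v \<in> \<theta>' (\<theta> F)" unfolding thetaf_def using vP by force
  qed
qed

definition "dom1 = {F \<in> spec. F \<inter> D1 \<noteq> {}}"

lemma inj_theta: "inj_on \<theta> dom1"
proof (rule inj_onI)
  fix F G assume "F \<in> dom1" "G \<in> dom1" "\<theta> F = \<theta> G"
  then have F: "F \<in> spec" "F \<inter> D1 \<noteq> {}" and G: "G \<in> spec" "G \<inter> D1 \<noteq> {}" and e: "\<theta> F = \<theta> G"
    unfolding dom1_def by auto
  have "F = \<theta>' (\<theta> F)" using theta_inv[OF F] by simp
  also have "\<dots> = \<theta>' (\<theta> G)" using e by simp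
  also have "\<dots> = G" using theta_inv[OF G] by simp
  finally show "F = G" .
qed

lemma theta_Bs:
  assumes x: "x \<in> D1" and Y: "Y \<subseteq> P"
  shows "\<theta> ` Bs x Y = Bs (\<alpha> x) ((\<lambda>y. \<alpha> (m x y)) ` Y)"
proof
  interpret S: pmap P m z D2 D1 \<beta> \<alpha> by (rule pmap_sym)
  show "\<theta> ` Bs x Y \<subseteq> Bs (\<alpha> x) ((\<lambda>y. \<alpha> (m x y)) ` Y)"
  proof
    fix G assume "G \<in> \<theta> ` Bs x Y"
    then obtain F where F: "F \<in> Bs x Y" "G = \<theta> F" by blast
    have FF: "F \<in> spec" "x \<in> F" "\<forall>y\<in>Y. y \<notin> F" using F unfolding Bs_def Vset_def by blast+
    have Gs: "G \<in> spec" using theta_spec[OF FF(1)] FF(2) x F(2) by blast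
    have ax: "\<alpha> x \<in> G" using theta_mem[OF FF(1) x] FF(2) F(2) by blast
    have "\<alpha> (m x y) \<notin> G" if y: "y \<in> Y" for y
    proof
      assume "\<alpha> (m x y) \<in> G"
      moreover have xyD: "m x y \<in> D1" using D1_meet x Y y by blast
      ultimately have "m x y \<in> F" using theta_mem[OF FF(1) xyD] F(2) by blast
      then have "y \<in> F" using spec_meet[OF FF(1)] x D1P Y y by blast
      then show False using FF y by blast
    qed
    then show "G \<in> Bs (\<alpha> x) ((\<lambda>y. \<alpha> (m x y)) ` Y)" unfolding Bs_def Vset_def using Gs ax by blast
  qed
  show "Bs (\<alpha> x) ((\<lambda>y. \<alpha> (m x y)) ` Y) \<subseteq> \<theta> ` Bs x Y"
  proof
    fix G assume G: "G \<in> Bs (\<alpha> x) ((\<lambda>y. \<alpha> (m x y)) ` Y)"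
    have GG: "G \<in> spec" "\<alpha> x \<in> G" "\<forall>y\<in>Y. \<alpha> (m x y) \<notin> G" using G unfolding Bs_def Vset_def by blast+
    have axD: "\<alpha> x \<in> D2" using \<alpha>D x .
    have ne: "G \<inter> D2 \<noteq> {}" using GG axD by blast
    define F where "F = \<theta>' G"
    have Fs: "F \<in> spec" unfolding F_def using S.theta_spec[OF GG(1) ne] .
    have tF: "\<theta> F = G" unfolding F_def using S.theta_inv[OF GG(1) ne] .
    have xF: "x \<in> F" using S.theta_mem[OF GG(1) axD] GG(2) \<beta>\<alpha>[OF x] unfolding F_def by simp
    have "y \<notin> F" if y: "y \<in> Y" for y
    proof
      assume "y \<in> F"
      then have "m x y \<in> F" using specD(5)[OF Fs xF] by blast
      moreover have xyD: "m x y \<in> D1" using D1_meet x Y y by blast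
      ultimately have "\<alpha> (m x y) \<in> G" using theta_mem[OF Fs xyD] tF by blast
      then show False using GG y by blast
    qed
    then have "F \<in> Bs x Y" unfolding Bs_def Vset_def using Fs xF by blast
    then show "G \<in> \<theta> ` Bs x Y" using tF by blast
  qed
qed

lemma downD1: "x \<in> D1 \<Longrightarrow> y \<in> P \<Longrightarrow> sle m y x \<Longrightarrow> y \<in> D1" by (rule down1)

lemma J_dom: "U \<in> J D1 \<Longrightarrow> U \<subseteq> dom1"
proof
  fix F assume U: "U \<in> J D1" and F: "F \<in> U"
  obtain \<B> where B: "finite \<B>" "\<forall>p\<in>\<B>. goodp p \<and> fst p \<in> D1" "U = UB \<B>" using U unfolding J_def by blast
  then obtain p where p: "p \<in> \<B>" "F \<in> Bs (fst p) (snd p)" using F unfolding UB_def by blast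
  then show "F \<in> dom1" unfolding dom1_def Bs_def Vset_def using B by blast
qed

definition gmap :: "'a \<times> 'a set \<Rightarrow> 'a \<times> 'a set" where
  "gmap p = (\<alpha> (fst p), (\<lambda>y. \<alpha> (m (fst p) y)) ` snd p)"

lemma gmap_good: "goodp p \<Longrightarrow> fst p \<in> D1 \<Longrightarrow> goodp (gmap p) \<and> fst (gmap p) \<in> D2"
proof -
  assume g: "goodp p" "fst p \<in> D1"
  have "\<alpha> (m (fst p) y) \<in> P" if "y \<in> snd p" for y
    using \<alpha>D[OF D1_meet[OF g(2)]] D2P that g(1) unfolding goodp_def by blast
  then show ?thesis using g \<alpha>D D2P unfolding goodp_def gmap_def by auto
qed

lemma theta_UB:
  assumes "\<forall>p\<in>\<B>. goodp p \<and> fst p \<in> D1"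
  shows "\<theta> ` UB \<B> = UB (gmap ` \<B>)"
proof -
  have "\<theta> ` UB \<B> = (\<Union>p\<in>\<B>. \<theta> ` Bs (fst p) (snd p))" unfolding UB_def by blast
  also have "\<dots> = (\<Union>p\<in>\<B>. Bs (fst (gmap p)) (snd (gmap p)))"
  proof (rule SUP_cong[OF refl])
    fix p assume "p \<in> \<B>"
    then show "\<theta> ` Bs (fst p) (snd p) = Bs (fst (gmap p)) (snd (gmap p))"
      using theta_Bs assms unfolding gmap_def goodp_def by simp
  qed
  finally show ?thesis unfolding UB_def by simp
qed

lemma theta_J: "U \<in> J D1 \<Longrightarrow> \<theta> ` U \<in> J D2"
proof -
  assume U: "U \<in> J D1"
  obtain \<B> where B: "finite \<B>" "\<forall>p\<in>\<B>. goodp p \<and> fst p \<in> D1" "U = UB \<B>" using U unfolding J_def by blast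
  have "\<theta> ` U = UB (gmap ` \<B>)" using theta_UB B by simp
  moreover have "finite (gmap ` \<B>)" "\<forall>p\<in>gmap ` \<B>. goodp p \<and> fst p \<in> D2" using B gmap_good by auto
  ultimately show ?thesis unfolding J_def by blast
qed

lemma J1_ideal: "gba_ideal Tcs (J D1)"
  by (rule J_ideal[OF D1P]) (blast intro: down1)

lemma J1_closed: "U \<in> J D1 \<Longrightarrow> W \<in> J D1 \<Longrightarrow> U \<union> W \<in> J D1 \<and> U \<inter> W \<in> J D1 \<and> U - W \<in> J D1"
  using J_closed[of D1 U W] D1P down1 by blast

definition hp :: "'a set set \<Rightarrow> 'a set set" where
  "hp U = (if U \<in> J D1 then \<theta> ` U else {})"

definition ppred :: "('a set set \<Rightarrow> 'a set set) \<Rightarrow> bool" where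
  "ppred h \<longleftrightarrow> bij_betw h (J D1) (J D2) \<and> gba_hom (J D1) h \<and>
       (\<forall>x\<in>D1. h (V x) = V (\<alpha> x)) \<and> (\<forall>U. U \<notin> J D1 \<longrightarrow> h U = {})"

lemma V_J1: "x \<in> D1 \<Longrightarrow> V x \<in> J D1"
proof -
  assume x: "x \<in> D1"
  have "UB {(x,{})} = V x" by (simp add: UB_def Bs_def)
  moreover have "finite {(x,{})} \<and> (\<forall>p\<in>{(x,{})}. goodp p \<and> fst p \<in> D1)" using x D1P by (auto simp: goodp_def)
  ultimately show ?thesis unfolding J_def by blast
qed

lemma ppred_hp: "ppred hp"
  unfolding ppred_def
proof (intro conjI ballI allI impI)
  interpret S: pmap P m z D2 D1 \<beta> \<alpha> by (rule pmap_sym)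
  have injU: "\<theta> ` U = \<theta> ` W \<longleftrightarrow> U = W" if "U \<in> J D1" "W \<in> J D1" for U W
    using inj_on_image_eq_iff[OF inj_theta J_dom[OF that(1)] J_dom[OF that(2)]] .
  show "bij_betw hp (J D1) (J D2)" unfolding bij_betw_def
  proof
    show "inj_on hp (J D1)" by (rule inj_onI) (simp add: hp_def injU)
    show "hp ` J D1 = J D2"
    proof
      show "hp ` J D1 \<subseteq> J D2" using theta_J unfolding hp_def by auto
      show "J D2 \<subseteq> hp ` J D1"
      proof
        fix W assume W: "W \<in> J D2"
        have U: "\<theta>' ` W \<in> J D1" using S.theta_J[OF W] .
        have "\<theta> ` \<theta>' ` W = W" unfolding image_image
        proof -
          have "\<theta> (\<theta>' G) = G" if "G \<in> W" for G
            using S.theta_inv S.J_dom[OF W] that unfolding S.dom1_def by blast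
          then show "(\<lambda>x. \<theta> (\<theta>' x)) ` W = W" by simp
        qed
        then have "hp (\<theta>' ` W) = W" unfolding hp_def using U by simp
        then show "W \<in> hp ` J D1" using U by blast
      qed
    qed
  qed
  have down: "\<And>x y. x \<in> D1 \<Longrightarrow> y \<in> P \<Longrightarrow> sle m y x \<Longrightarrow> y \<in> D1" by (rule down1)
  show "gba_hom (J D1) hp" unfolding gba_hom_def
  proof (intro ballI conjI)
    fix U W assume U: "U \<in> J D1" and W: "W \<in> J D1"
    have c: "U \<union> W \<in> J D1" "U \<inter> W \<in> J D1" "U - W \<in> J D1" using J1_closed[OF U W] by auto
    have d: "U \<subseteq> dom1" "W \<subseteq> dom1" using J_dom U W by auto
    show "hp (U \<union> W) = hp U \<union> hp W" using U W c unfolding hp_def by auto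
    show "hp (U \<inter> W) = hp U \<inter> hp W" using U W c inj_on_image_Int[OF inj_theta d] unfolding hp_def by simp
    have "\<theta> ` (U - W) = \<theta> ` U - \<theta> ` W" using inj_on_image_set_diff[OF inj_theta _ d(2)] d(1) by blast
    then show "hp (U - W) = hp U - hp W" using U W c unfolding hp_def by simp
  qed
next
  fix x assume x: "x \<in> D1"
    have "V x = Bs x {}" "V (\<alpha> x) = Bs (\<alpha> x) {}" unfolding Bs_def by simp_all
    moreover have "hp (V x) = \<theta> ` V x" using V_J1[OF x] unfolding hp_def by simp
    ultimately show "hp (V x) = V (\<alpha> x)" using theta_Bs[of x "{}"] x by simp
next
    fix U assume "U \<notin> J D1" then show "hp U = {}" unfolding hp_def by simp
qed

lemma ppred_det:
  assumes h: "ppred h" and U: "U \<in> J D1"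
  shows "h U = \<theta> ` U"
proof -
  have down: "\<And>x y. x \<in> D1 \<Longrightarrow> y \<in> P \<Longrightarrow> sle m y x \<Longrightarrow> y \<in> D1" by (rule down1)
  have hom: "gba_hom (J D1) h" and hV: "\<forall>x\<in>D1. h (V x) = V (\<alpha> x)" using h unfolding ppred_def by blast+
  have un: "\<And>U W. U \<in> J D1 \<Longrightarrow> W \<in> J D1 \<Longrightarrow> U \<union> W \<in> J D1" using J1_closed by blast
  have e: "{} \<in> J D1" using J1_ideal unfolding gba_ideal_def by blast
  obtain \<B> where B: "finite \<B>" "\<forall>p\<in>\<B>. goodp p \<and> fst p \<in> D1" "U = UB \<B>" using U unfolding J_def by blast
  have BsJ: "Bs (fst p) (snd p) \<in> J D1" if "p \<in> \<B>" for p
  proof -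
    have "UB {p} = Bs (fst p) (snd p)" by (simp add: UB_def)
    moreover have "finite {p} \<and> (\<forall>q\<in>{p}. goodp q \<and> fst q \<in> D1)" using B that by auto
    ultimately show ?thesis unfolding J_def by blast
  qed
  have sub: "(\<lambda>p. Bs (fst p) (snd p)) ` \<B> \<subseteq> J D1" using BsJ by blast
  have fin: "finite ((\<lambda>p. Bs (fst p) (snd p)) ` \<B>)" using B(1) by simp
  have "h U = \<Union>(h ` ((\<lambda>p. Bs (fst p) (snd p)) ` \<B>))"
    unfolding B(3) UB_def using hom_Union[OF hom e un fin sub] by (rule conjunct1)
  also have "\<dots> = (\<Union>p\<in>\<B>. Bs (fst (gmap p)) (snd (gmap p)))"
    unfolding image_image
  proof (rule SUP_cong[OF refl])
    fix p assume p: "p \<in> \<B>"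
    then have g: "fst p \<in> D1" "fst p \<in> P" "finite (snd p)" "snd p \<subseteq> P" using B D1P unfolding goodp_def by auto
    have mD: "m (fst p) y \<in> D1" if "y \<in> snd p" for y using D1_meet g that by blast
    have s2: "V ` (\<lambda>y. m (fst p) y) ` snd p \<subseteq> J D1" using V_J1 mD by blast
    have eq: "Bs (fst p) (snd p) = V (fst p) - \<Union>(V ` (\<lambda>y. m (fst p) y) ` snd p)"
      unfolding Bs_def using V_Int g(2) g(4) by blast
    have "h (Bs (fst p) (snd p)) = h (V (fst p)) - \<Union>(h ` V ` (\<lambda>y. m (fst p) y) ` snd p)"
      unfolding eq
      by (rule hom_Diff_Union[OF hom e un finite_imageI[OF finite_imageI[OF g(3)]] s2 V_J1[OF g(1)]])
    also have "h ` V ` (\<lambda>y. m (fst p) y) ` snd p = V ` (\<lambda>y. \<alpha> (m (fst p) y)) ` snd p" unfolding image_image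
      using hV mD by (intro image_cong) auto
    also have "h (V (fst p)) = V (\<alpha> (fst p))" using hV g(1) by blast
    finally show "h (Bs (fst p) (snd p)) = Bs (fst (gmap p)) (snd (gmap p))" unfolding Bs_def gmap_def by simp
  qed
  also have "\<dots> = UB (gmap ` \<B>)" unfolding UB_def by simp
  also have "\<dots> = \<theta> ` U" using theta_UB B by simp
  finally show ?thesis .
qed

lemma THE_ppred: "(THE h. ppred h) = hp"
proof (rule the_equality)
  show "ppred hp" by (rule ppred_hp)
  fix h assume h: "ppred h"
  show "h = hp"
  proof
    fix U show "h U = hp U"
    proof (cases "U \<in> J D1")
      case True then show ?thesis using ppred_det[OF h True] unfolding hp_def by simp
    next
      case False then show ?thesis using h unfolding ppred_def hp_def by simp
    qed
  qed
qed

lemma THE_ppred_V: "x \<in> D1 \<Longrightarrow> (THE h. ppred h) (V x) = V (\<alpha> x)"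
  using THE_ppred ppred_hp unfolding ppred_def by simp

end


locale isg =
  fixes S :: "'a set" and m :: "'a \<Rightarrow> 'a \<Rightarrow> 'a" and z :: 'a
  assumes isz: "inverse_semigroup_zero S m z"
begin

abbreviation "iv \<equiv> sinv S m"
abbreviation "E \<equiv> idem S m"

lemma D1: "\<forall>a\<in>S. \<forall>b\<in>S. m a b \<in> S" using isz unfolding inverse_semigroup_zero_def by (elim conjE) assumption
lemma D2: "\<forall>a\<in>S. \<forall>b\<in>S. \<forall>c\<in>S. m (m a b) c = m a (m b c)" using isz unfolding inverse_semigroup_zero_def by (elim conjE) assumption
lemma D3: "z \<in> S" using isz unfolding inverse_semigroup_zero_def by (elim conjE) assumption
lemma D4: "\<forall>a\<in>S. m z a = z \<and> m a z = z" using isz unfolding inverse_semigroup_zero_def by (elim conjE) assumption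
lemma D5: "\<forall>a\<in>S. \<exists>!b. b \<in> S \<and> m (m a b) a = a \<and> m (m b a) b = b" using isz unfolding inverse_semigroup_zero_def by (elim conjE) assumption

lemma cl[simp]: "a \<in> S \<Longrightarrow> b \<in> S \<Longrightarrow> m a b \<in> S"
  using D1 by blast
lemma as: "a \<in> S \<Longrightarrow> b \<in> S \<Longrightarrow> c \<in> S \<Longrightarrow> m (m a b) c = m a (m b c)"
  using D2 by blast
lemma zS[simp]: "z \<in> S" by (rule D3)
lemma zl[simp]: "a \<in> S \<Longrightarrow> m z a = z"
  using D4 by blast
lemma zr[simp]: "a \<in> S \<Longrightarrow> m a z = z"
  using D4 by blast
lemma ex1: "a \<in> S \<Longrightarrow> \<exists>!b. b \<in> S \<and> m (m a b) a = a \<and> m (m b a) b = b"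
  using D5 by blast

lemma iv_props: assumes "a \<in> S"
  shows "iv a \<in> S" "m (m a (iv a)) a = a" "m (m (iv a) a) (iv a) = iv a"
  using theI'[OF ex1[OF assms]] unfolding sinv_def by blast+

lemma ivS[simp]: "a \<in> S \<Longrightarrow> iv a \<in> S" using iv_props by blast

lemma iv1[simp]: "a \<in> S \<Longrightarrow> m a (m (iv a) a) = a"
  using iv_props(2) as[of a "iv a" a] by simp
lemma iv2[simp]: "a \<in> S \<Longrightarrow> m (iv a) (m a (iv a)) = iv a"
  using iv_props(3) as[of "iv a" a "iv a"] by simp

lemma iv1'[simp]: "a \<in> S \<Longrightarrow> t \<in> S \<Longrightarrow> m a (m (iv a) (m a t)) = m a t"
  using as[of a "m (iv a) a" t] as[of "iv a" a t] by simp
lemma iv2'[simp]: "a \<in> S \<Longrightarrow> t \<in> S \<Longrightarrow> m (iv a) (m a (m (iv a) t)) = m (iv a) t"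
  using as[of "iv a" "m a (iv a)" t] as[of a "iv a" t] by simp

lemma iv_unique: assumes "a \<in> S" "b \<in> S" "m (m a b) a = a" "m (m b a) b = b" shows "iv a = b"
  unfolding sinv_def using the1_equality[OF ex1[OF assms(1)]] assms by blast

lemma iv_iv[simp]: "a \<in> S \<Longrightarrow> iv (iv a) = a"
  using iv_unique[of "iv a" a] iv_props by simp

lemma E_iff: "e \<in> E \<longleftrightarrow> e \<in> S \<and> m e e = e" unfolding idem_def by blast

lemma ES: "e \<in> E \<Longrightarrow> e \<in> S" unfolding idem_def by blast

lemma idem_l: "e \<in> E \<Longrightarrow> t \<in> S \<Longrightarrow> m e (m e t) = m e t"
  using as[of e e t] unfolding idem_def by simp

lemma iv_E: "e \<in> E \<Longrightarrow> iv e = e"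
  using iv_unique[of e e] unfolding idem_def by simp

lemma zE: "z \<in> E" unfolding idem_def by simp

lemma E_mult_aux:
  assumes e: "e \<in> E" and f: "f \<in> E"
  shows "m e f \<in> E"
proof -
  have eS: "e \<in> S" and fS: "f \<in> S" using e f ES by auto
  have ee: "m e e = e" and ff: "m f f = f" using e f unfolding idem_def by auto
  define x where "x = iv (m e f)"
  have xS: "x \<in> S" unfolding x_def using eS fS by simp
  define y where "y = m f (m x e)"
  have yS: "y \<in> S" unfolding y_def using xS eS fS by simp
  have r1: "m (m e f) x = m e (m f x)" using as eS fS xS by simp
  have i1: "m (m e f) (m x (m e f)) = m e f" using iv1[of "m e f"] eS fS unfolding x_def by (simp add: as)
  have i2: "m x (m (m e f) x) = x" using iv2[of "m e f"] eS fS unfolding x_def by (simp add: as)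
  have "m (m (m e f) y) (m e f) = m e (m f (m x (m e f)))"
    unfolding y_def using eS fS xS by (simp add: as idem_l[OF e] idem_l[OF f] ee ff)
  also have "\<dots> = m e f" using i1 eS fS xS by (simp add: as)
  finally have c1: "m (m (m e f) y) (m e f) = m e f" .
  have "m (m y (m e f)) y = m f (m (m x (m (m e f) x)) e)"
    unfolding y_def using eS fS xS by (simp add: as idem_l[OF e] idem_l[OF f] ee ff)
  also have "\<dots> = y" using i2 unfolding y_def by simp
  finally have c2: "m (m y (m e f)) y = y" .
  have xy: "x = y" unfolding x_def using iv_unique[OF _ yS c1 c2] eS fS by simp
  have "m x x = m y y" by (simp add: xy)
  also have "\<dots> = m f (m (m x (m (m e f) x)) e)"
    unfolding y_def using eS fS xS by (simp add: as)
  finally have "m x x = m f (m (m x (m (m e f) x)) e)" .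
  also have "\<dots> = x" using i2 xy unfolding y_def by simp
  finally have "x \<in> E" using xS unfolding idem_def by simp
  then have "iv x = x" by (rule iv_E)
  then have "m e f = x" unfolding x_def using eS fS by simp
  then show ?thesis using \<open>x \<in> E\<close> by simp
qed

lemma E_comm:
  assumes e: "e \<in> E" and f: "f \<in> E"
  shows "m e f = m f e"
proof -
  have eS: "e \<in> S" and fS: "f \<in> S" using e f ES by auto
  have ef: "m e f \<in> E" and fe: "m f e \<in> E" using E_mult_aux e f by auto
  have ee: "m e e = e" and ff: "m f f = f" using e f unfolding idem_def by auto
  have efef: "m e (m f (m e f)) = m e f" using ef eS fS unfolding idem_def by (simp add: as)
  have fefe: "m f (m e (m f e)) = m f e" using fe eS fS unfolding idem_def by (simp add: as)
  have c1: "m (m (m e f) (m f e)) (m e f) = m e f"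
    using eS fS efef by (simp add: as idem_l[OF f] idem_l[OF e] ee ff)
  have c2: "m (m (m f e) (m e f)) (m f e) = m f e"
    using eS fS fefe by (simp add: as idem_l[OF f] idem_l[OF e] ee ff)
  have "iv (m e f) = m f e" using iv_unique[OF _ _ c1 c2] eS fS by simp
  then show ?thesis using iv_E[OF ef] by simp
qed

lemma E_mult[simp]: "e \<in> E \<Longrightarrow> f \<in> E \<Longrightarrow> m e f \<in> E" by (rule E_mult_aux)

lemma E_lc: "e \<in> E \<Longrightarrow> f \<in> E \<Longrightarrow> t \<in> S \<Longrightarrow> m e (m f t) = m f (m e t)"
proof -
  assume e: "e \<in> E" and f: "f \<in> E" and t: "t \<in> S"
  have "m e (m f t) = m (m e f) t" using as e f t ES by simp
  also have "\<dots> = m (m f e) t" using E_comm[OF e f] by simp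
  also have "\<dots> = m f (m e t)" using as e f t ES by simp
  finally show ?thesis .
qed

lemma aa_E[simp]: "a \<in> S \<Longrightarrow> m a (iv a) \<in> E"
  unfolding idem_def using iv1 by (simp add: as)
lemma aa_E2[simp]: "a \<in> S \<Longrightarrow> m (iv a) a \<in> E"
  unfolding idem_def using iv2 by (simp add: as)

lemma iv_mult:
  assumes a: "a \<in> S" and b: "b \<in> S"
  shows "iv (m a b) = m (iv b) (iv a)"
proof (rule iv_unique)
  show "m a b \<in> S" "m (iv b) (iv a) \<in> S" using a b by simp_all
  have c: "m (m b (iv b)) (m (iv a) a) = m (m (iv a) a) (m b (iv b))" using E_comm a b by simp
  have "m (m (m a b) (m (iv b) (iv a))) (m a b) = m a (m (m (m b (iv b)) (m (iv a) a)) b)"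
    using a b by (simp add: as)
  also have "\<dots> = m a (m (m (m (iv a) a) (m b (iv b))) b)" using c by simp
  also have "\<dots> = m a b" using a b by (simp add: as)
  finally show "m (m (m a b) (m (iv b) (iv a))) (m a b) = m a b" .
  have "m (m (m (iv b) (iv a)) (m a b)) (m (iv b) (iv a)) = m (iv b) (m (m (m (iv a) a) (m b (iv b))) (iv a))"
    using a b by (simp add: as)
  also have "\<dots> = m (iv b) (m (m (m b (iv b)) (m (iv a) a)) (iv a))" using c by simp
  also have "\<dots> = m (iv b) (iv a)" using a b by (simp add: as)
  finally show "m (m (m (iv b) (iv a)) (m a b)) (m (iv b) (iv a)) = m (iv b) (iv a)" .
qed

lemma nle_E: "x \<in> E \<Longrightarrow> y \<in> E \<Longrightarrow> nle S m x y \<longleftrightarrow> m x y = x"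
proof
  assume xy: "x \<in> E" "y \<in> E" "nle S m x y"
  then obtain e where e: "e \<in> E" "x = m e y" unfolding nle_def by blast
  have yy: "m y y = y" using xy unfolding idem_def by blast
  have "m x y = m e (m y y)" using e xy ES as by simp
  then show "m x y = x" using yy e by simp
next
  assume xy: "x \<in> E" "y \<in> E" "m x y = x"
  then show "nle S m x y" unfolding nle_def by (intro bexI[of _ x]) simp_all
qed

lemma slat_E: "slat E m z"
proof (rule slat.intro)
  fix a b c assume "a \<in> E" "b \<in> E" "c \<in> E"
  then show "m (m a b) c = m a (m b c)" using as ES by simp
next
  fix a b assume "a \<in> E" "b \<in> E"
  then show "m a b \<in> E" by simp
next
  fix a b assume "a \<in> E" "b \<in> E"
  then show "m a b = m b a" using E_comm by simp
next
  fix a assume "a \<in> E" then show "m a a = a" unfolding idem_def by blast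
next
  fix a assume "a \<in> E" then show "m z a = z" using ES by simp
next
  show "z \<in> E" by (rule zE)
qed

end


locale gisg = isg S m z for S m z +
  fixes \<phi> :: "'a \<Rightarrow> 'g::group_add"
  assumes gr: "grading S m z \<phi>"
begin

lemma gr0: "s \<in> S \<Longrightarrow> s \<noteq> z \<Longrightarrow> \<phi> s = 0 \<longleftrightarrow> s \<in> E"
proof -
  assume s: "s \<in> S" "s \<noteq> z"
  have eq: "{s \<in> S. s \<noteq> z \<and> \<phi> s = 0} = idem S m - {z}" using gr unfolding grading_def by (elim conjE)
  show ?thesis
  proof
    assume "\<phi> s = 0" then have "s \<in> {s \<in> S. s \<noteq> z \<and> \<phi> s = 0}" using s by blast
    then show "s \<in> E" unfolding eq by blast
  next
    assume "s \<in> E" then have "s \<in> idem S m - {z}" using s by blast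
    then show "\<phi> s = 0" unfolding eq[symmetric] by blast
  qed
qed

lemma grm: "a \<in> S \<Longrightarrow> b \<in> S \<Longrightarrow> m a b \<noteq> z \<Longrightarrow> \<phi> (m a b) = \<phi> a + \<phi> b"
  using gr unfolding grading_def by blast

lemma E_phi: "e \<in> E \<Longrightarrow> e \<noteq> z \<Longrightarrow> \<phi> e = 0" using gr0 ES by blast

lemma iv_nz: "s \<in> S \<Longrightarrow> s \<noteq> z \<Longrightarrow> iv s \<noteq> z"
proof
  assume s: "s \<in> S" "s \<noteq> z" and e: "iv s = z"
  have "s = m s (m (iv s) s)" using iv1[OF s(1)] by simp
  also have "\<dots> = z" using e s by simp
  finally show False using s by simp
qed

lemma ss_nz: "s \<in> S \<Longrightarrow> s \<noteq> z \<Longrightarrow> m s (iv s) \<noteq> z"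
proof
  assume s: "s \<in> S" "s \<noteq> z" and e: "m s (iv s) = z"
  have "s = m (m s (iv s)) s" using iv1[OF s(1)] as[of s "iv s" s] s by simp
  then show False using e s by simp
qed

lemma phi_iv: "s \<in> S \<Longrightarrow> s \<noteq> z \<Longrightarrow> \<phi> (iv s) = - \<phi> s"
proof -
  assume s: "s \<in> S" "s \<noteq> z"
  have "\<phi> (m s (iv s)) = 0" using E_phi[OF aa_E[OF s(1)] ss_nz[OF s]] .
  moreover have "\<phi> (m s (iv s)) = \<phi> s + \<phi> (iv s)" using grm[OF s(1) ivS[OF s(1)] ss_nz[OF s]] .
  ultimately show ?thesis using minus_unique[of "\<phi> s" "\<phi> (iv s)"] by simp
qed

lemma compat:
  assumes s: "s \<in> S" "s \<noteq> z" and t: "t \<in> S" "t \<noteq> z" and st: "\<phi> s = \<phi> t"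
    and e: "e \<in> E" and es: "m e (m (iv s) s) = e" and et: "m e (m (iv t) t) = e"
  shows "m s e = m t e"
proof (cases "e = z")
  case True then show ?thesis using s t by simp
next
  case False
  have eS: "e \<in> S" using e ES by blast
  have ee: "m e e = e" using e unfolding idem_def by blast
  have ivse: "iv (m s e) = m e (iv s)" using iv_mult[OF s(1) eS] iv_E[OF e] by simp
  have ivte: "iv (m t e) = m e (iv t)" using iv_mult[OF t(1) eS] iv_E[OF e] by simp
  have aa: "m (iv (m s e)) (m s e) = e"
  proof -
    have "m (iv (m s e)) (m s e) = m e (m (m (iv s) s) e)" unfolding ivse using s eS by (simp add: as)
    also have "\<dots> = m e (m e (m (iv s) s))" using E_comm[OF aa_E2[OF s(1)] e] by simp
    also have "\<dots> = e" using es ee idem_l[OF e] s by simp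
    finally show ?thesis .
  qed
  have bb: "m (iv (m t e)) (m t e) = e"
  proof -
    have "m (iv (m t e)) (m t e) = m e (m (m (iv t) t) e)" unfolding ivte using t eS by (simp add: as)
    also have "\<dots> = m e (m e (m (iv t) t))" using E_comm[OF aa_E2[OF t(1)] e] by simp
    also have "\<dots> = e" using et ee idem_l[OF e] t by simp
    finally show ?thesis .
  qed
  define a where "a = m s e"
  define b where "b = m t e"
  have abS: "a \<in> S" "b \<in> S" unfolding a_def b_def using s t eS by auto
  have anz: "a \<noteq> z"
  proof
    assume az: "a = z"
    have sez: "m s e = z" using az unfolding a_def .
    from aa have "m (iv z) z = e" by (simp only: sez)
    then have "e = z" by simp
    then show False using \<open>e \<noteq> z\<close> by simp
  qed
  have bnz: "b \<noteq> z"
  proof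
    assume bz: "b = z"
    have tez: "m t e = z" using bz unfolding b_def .
    from bb have "m (iv z) z = e" by (simp only: tez)
    then have "e = z" by simp
    then show False using \<open>e \<noteq> z\<close> by simp
  qed
  have pa: "\<phi> a = \<phi> s" using grm[OF s(1) eS] anz E_phi[OF e False] unfolding a_def by simp
  have pb: "\<phi> b = \<phi> t" using grm[OF t(1) eS] bnz E_phi[OF e False] unfolding b_def by simp
  have a_eq: "a = m a e" using iv1[OF abS(1)] aa unfolding a_def by simp
  have b_eq: "b = m b e" using iv1[OF abS(2)] bb unfolding b_def by simp
  define f where "f = m a (iv b)"
  define g where "g = m b (iv a)"
  have fS: "f \<in> S" "g \<in> S" unfolding f_def g_def using abS by auto
  have fb: "m f b = a"
  proof -
    have "m f b = m a (m (iv b) b)" unfolding f_def using abS by (simp add: as)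
    also have "\<dots> = m a e" using bb unfolding b_def by simp
    finally show ?thesis using a_eq by simp
  qed
  have ga: "m g a = b"
  proof -
    have "m g a = m b (m (iv a) a)" unfolding g_def using abS by (simp add: as)
    also have "\<dots> = m b e" using aa unfolding a_def by simp
    finally show ?thesis using b_eq by simp
  qed
  have fnz: "f \<noteq> z" using fb anz abS by auto
  have gnz: "g \<noteq> z" using ga bnz abS by auto
  have "\<phi> f = \<phi> a + \<phi> (iv b)" using grm[OF abS(1) ivS[OF abS(2)]] fnz unfolding f_def by simp
  also have "\<dots> = 0" using pa pb st phi_iv[OF abS(2) bnz] by simp
  finally have fE: "f \<in> E" using gr0 fS fnz by blast
  have "\<phi> g = \<phi> b + \<phi> (iv a)" using grm[OF abS(2) ivS[OF abS(1)]] gnz unfolding g_def by simp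
  also have "\<dots> = 0" using pa pb st phi_iv[OF abS(1) anz] by simp
  finally have gE: "g \<in> E" using gr0 fS gnz by blast
  have "b = m g (m f (m g a))" using ga fb by simp
  also have "\<dots> = m g (m g (m f a))" using E_lc[OF fE gE abS(1)] by simp
  also have "\<dots> = m g (m f a)" using idem_l[OF gE] fE abS ES by simp
  also have "\<dots> = m f (m g a)" using E_lc[OF fE gE abS(1)] by simp
  also have "\<dots> = a" using ga fb by simp
  finally show ?thesis unfolding a_def b_def by simp
qed

lemma phikg_wd:
  assumes x: "x \<in> E" and t: "t \<in> S" "t \<noteq> z" "\<phi> t = g" and xt: "m x (m (iv t) t) = x"
  shows "phikg S m z \<phi> g x = m t (m x (iv t))"
proof -
  have xS: "x \<in> S" using x ES by blast
  have nt: "nle S m x (m (iv t) t)" using nle_E[OF x aa_E2[OF t(1)]] xt by simp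
  have ex: "\<exists>s. s \<in> S \<and> s \<noteq> z \<and> \<phi> s = g \<and> nle S m x (m (iv s) s)" using t nt by blast
  define s where "s = (SOME s. s \<in> S \<and> s \<noteq> z \<and> \<phi> s = g \<and> nle S m x (m (iv s) s))"
  have s: "s \<in> S" "s \<noteq> z" "\<phi> s = g" "nle S m x (m (iv s) s)"
    using someI_ex[OF ex] unfolding s_def by blast+
  have xs: "m x (m (iv s) s) = x" using nle_E[OF x aa_E2[OF s(1)]] s(4) by simp
  have eq: "m s x = m t x" using compat[OF s(1,2) t(1,2) _ x xs xt] s(3) t(3) by simp
  have k: "m (m u x) (iv u) = m (m u x) (iv (m u x))" if "u \<in> S" for u
    using iv_mult[OF that xS] iv_E[OF x] xS that by (simp add: as idem_l[OF x])
  have "phikg S m z \<phi> g x = m (m s x) (iv s)" unfolding phikg_def Let_def s_def by simp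
  also have "\<dots> = m (m t x) (iv t)" using k[OF s(1)] k[OF t(1)] eq by simp
  finally show ?thesis using t xS by (simp add: as)
qed

lemma Ekg_iff: "x \<in> Ekg S m z \<phi> g \<longleftrightarrow> x \<in> E \<and> (\<exists>s\<in>S. s \<noteq> z \<and> \<phi> s = g \<and> m x (m s (iv s)) = x)"
  unfolding Ekg_def using nle_E aa_E by blast

lemma Ekg_E: "x \<in> Ekg S m z \<phi> g \<Longrightarrow> x \<in> E" unfolding Ekg_iff by blast

lemma Ekg_down: "x \<in> Ekg S m z \<phi> g \<Longrightarrow> y \<in> E \<Longrightarrow> m y x = y \<Longrightarrow> y \<in> Ekg S m z \<phi> g"
proof -
  assume x: "x \<in> Ekg S m z \<phi> g" and y: "y \<in> E" and yx: "m y x = y"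
  obtain s where s: "s \<in> S" "s \<noteq> z" "\<phi> s = g" "m x (m s (iv s)) = x" using x unfolding Ekg_iff by blast
  have xS: "x \<in> S" "y \<in> S" using x y Ekg_E ES by auto
  have "m y (m s (iv s)) = m (m y x) (m s (iv s))" using yx by simp
  also have "\<dots> = m y (m x (m s (iv s)))" using xS s by (simp add: as)
  also have "\<dots> = y" using s yx by simp
  finally show ?thesis unfolding Ekg_iff using y s by blast
qed

lemma absorb: "x \<in> S \<Longrightarrow> t \<in> S \<Longrightarrow> w \<in> S \<Longrightarrow> m x (m (iv t) t) = x \<Longrightarrow> m x (m (iv t) (m t w)) = m x w"
proof -
  assume h: "x \<in> S" "t \<in> S" "w \<in> S" "m x (m (iv t) t) = x"
  have "m (m x (m (iv t) t)) w = m x (m (iv t) (m t w))" using h(1-3) by (simp add: as)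
  then show ?thesis using h(4) by simp
qed

lemma phi_inv:
  assumes x: "x \<in> Ekg S m z \<phi> (-g)"
  shows "phikg S m z \<phi> g x \<in> Ekg S m z \<phi> g" "phikg S m z \<phi> (-g) (phikg S m z \<phi> g x) = x"
    "\<exists>t\<in>S. t \<noteq> z \<and> \<phi> t = g \<and> m x (m (iv t) t) = x \<and> phikg S m z \<phi> g x = m t (m x (iv t))"
proof -
  obtain u where u: "u \<in> S" "u \<noteq> z" "\<phi> u = -g" "m x (m u (iv u)) = x" using x unfolding Ekg_iff by blast
  have xE: "x \<in> E" using x Ekg_E by blast
  have xS: "x \<in> S" using xE ES by blast
  have xx: "m x x = x" using xE unfolding idem_def by blast
  define t where "t = iv u"
  have t: "t \<in> S" "t \<noteq> z" "\<phi> t = g" unfolding t_def using u iv_nz phi_iv by auto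
  have tu: "iv t = u" unfolding t_def using u by simp
  have xt: "m x (m (iv t) t) = x" using u tu unfolding t_def by simp
  have ph: "phikg S m z \<phi> g x = m t (m x (iv t))" using phikg_wd[OF xE t(1,2,3) xt] .
  then show "\<exists>t\<in>S. t \<noteq> z \<and> \<phi> t = g \<and> m x (m (iv t) t) = x \<and> phikg S m z \<phi> g x = m t (m x (iv t))"
    using t xt by blast
  define y where "y = m t (m x (iv t))"
  have yS: "y \<in> S" unfolding y_def using t xS by simp
  have "m y y = m t (m x (m (iv t) (m t (m x (iv t)))))" unfolding y_def using t xS by (simp add: as)
  also have "\<dots> = m t (m x (m x (iv t)))" using absorb[OF xS t(1) _ xt] t xS by simp
  also have "\<dots> = y" unfolding y_def using idem_l[OF xE] t by simp
  finally have yE: "y \<in> E" using yS unfolding idem_def by blast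
  have "m y (m t (iv t)) = m t (m x (m (iv t) (m t (iv t))))" unfolding y_def using t xS by (simp add: as)
  also have "\<dots> = y" unfolding y_def using t by simp
  finally have yt: "m y (m t (iv t)) = y" .
  show "phikg S m z \<phi> g x \<in> Ekg S m z \<phi> g" unfolding ph y_def[symmetric] Ekg_iff using yE t yt by blast
  have t2: "iv t \<in> S" "iv t \<noteq> z" "\<phi> (iv t) = -g" using t iv_nz phi_iv by auto
  have yt2: "m y (m (iv (iv t)) (iv t)) = y" using yt t by simp
  have "phikg S m z \<phi> (-g) y = m (iv t) (m y (iv (iv t)))" using phikg_wd[OF yE t2 yt2] .
  also have "\<dots> = m (iv t) (m t (m x (m (iv t) t)))" unfolding y_def using t xS by (simp add: as)
  also have "\<dots> = m (iv t) (m t x)" using xt by simp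
  also have "\<dots> = m (m (iv t) t) x" using t xS by (simp add: as)
  also have "\<dots> = m x (m (iv t) t)" using E_comm[OF aa_E2[OF t(1)] xE] by simp
  also have "\<dots> = x" using xt .
  finally show "phikg S m z \<phi> (-g) (phikg S m z \<phi> g x) = x" unfolding ph y_def .
qed

lemma phi_mono:
  assumes x: "x \<in> Ekg S m z \<phi> (-g)" and y: "y \<in> Ekg S m z \<phi> (-g)" and xy: "m x y = x"
  shows "m (phikg S m z \<phi> g x) (phikg S m z \<phi> g y) = phikg S m z \<phi> g x"
proof -
  obtain t where t: "t \<in> S" "t \<noteq> z" "\<phi> t = g" "m y (m (iv t) t) = y" "phikg S m z \<phi> g y = m t (m y (iv t))"
    using phi_inv(3)[OF y] by blast
  have xE: "x \<in> E" and yE: "y \<in> E" using x y Ekg_E by auto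
  have xS: "x \<in> S" "y \<in> S" using xE yE ES by auto
  have xt: "m x (m (iv t) t) = x"
  proof -
    have "m x (m (iv t) t) = m (m x y) (m (iv t) t)" using xy by simp
    also have "\<dots> = m x (m y (m (iv t) t))" using xS t by (simp add: as)
    finally show ?thesis using t xy by simp
  qed
  have px: "phikg S m z \<phi> g x = m t (m x (iv t))" using phikg_wd[OF xE t(1,2,3) xt] .
  have "m (m t (m x (iv t))) (m t (m y (iv t))) = m t (m x (m (iv t) (m t (m y (iv t)))))"
    using t xS by (simp add: as)
  also have "\<dots> = m t (m x (m y (iv t)))" using absorb[OF xS(1) t(1) _ xt] t xS by simp
  also have "\<dots> = m t (m (m x y) (iv t))" using t xS by (simp add: as)
  finally show ?thesis using px t xy by simp
qed

lemma pmap_inst: "pmap E m z (Ekg S m z \<phi> (-g)) (Ekg S m z \<phi> g) (phikg S m z \<phi> g) (phikg S m z \<phi> (-g))"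
proof (intro pmap.intro slat_E pmap_axioms.intro)
  show "Ekg S m z \<phi> (-g) \<subseteq> E" "Ekg S m z \<phi> g \<subseteq> E" using Ekg_E by blast+
  fix x y
  show "x \<in> Ekg S m z \<phi> (- g) \<Longrightarrow> y \<in> E \<Longrightarrow> sle m y x \<Longrightarrow> y \<in> Ekg S m z \<phi> (- g)"
    unfolding sle_def using Ekg_down by blast
  show "x \<in> Ekg S m z \<phi> g \<Longrightarrow> y \<in> E \<Longrightarrow> sle m y x \<Longrightarrow> y \<in> Ekg S m z \<phi> g"
    unfolding sle_def using Ekg_down by blast
  show "x \<in> Ekg S m z \<phi> (- g) \<Longrightarrow> phikg S m z \<phi> g x \<in> Ekg S m z \<phi> g" by (rule phi_inv(1))
  show "x \<in> Ekg S m z \<phi> (- g) \<Longrightarrow> phikg S m z \<phi> (- g) (phikg S m z \<phi> g x) = x" by (rule phi_inv(2))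
  show "y \<in> Ekg S m z \<phi> g \<Longrightarrow> phikg S m z \<phi> (- g) y \<in> Ekg S m z \<phi> (- g)"
    using phi_inv(1)[of y "-g"] by simp
  show "y \<in> Ekg S m z \<phi> g \<Longrightarrow> phikg S m z \<phi> g (phikg S m z \<phi> (- g) y) = y"
    using phi_inv(2)[of y "-g"] by simp
  show "x \<in> Ekg S m z \<phi> (- g) \<Longrightarrow> y \<in> Ekg S m z \<phi> (- g) \<Longrightarrow> sle m x y \<Longrightarrow> sle m (phikg S m z \<phi> g x) (phikg S m z \<phi> g y)"
    unfolding sle_def by (rule phi_mono)
  show "x \<in> Ekg S m z \<phi> g \<Longrightarrow> y \<in> Ekg S m z \<phi> g \<Longrightarrow> sle m x y \<Longrightarrow> sle m (phikg S m z \<phi> (- g) x) (phikg S m z \<phi> (- g) y)"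
    unfolding sle_def using phi_mono[of x "-g" y] by simp
qed

end


lemma sinv_sub:
  assumes i1: "inverse_semigroup_zero S1 m z" and i2: "inverse_semigroup_zero S2 m z"
    and S12: "S1 \<subseteq> S2" and s: "s \<in> S1"
  shows "sinv S1 m s = sinv S2 m s"
proof -
  interpret I1: isg S1 m z by (rule isg.intro[OF i1])
  interpret I2: isg S2 m z by (rule isg.intro[OF i2])
  have "sinv S2 m s = sinv S1 m s"
    using I2.iv_unique[of s "sinv S1 m s"] I1.iv_props[OF s] S12 s by blast
  then show ?thesis by simp
qed

theorem theorem5p7:
  fixes S1 S2 :: "'a set" and m :: "'a \<Rightarrow> 'a \<Rightarrow> 'a" and z :: 'a
    and \<phi> :: "'a \<Rightarrow> 'g::group_add"
  assumes "strongly_E_unitary S2 m z \<phi>"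
    and "strongly_E_unitary S1 m z \<phi>"
    and "cover_sub S1 S2 m z"
    and "\<forall>x\<in>idem S1 m. \<forall>y\<in>idem S1 m. \<forall>s\<in>S2. \<exists>s'\<in>S1. nle S2 m (m (m x s) y) s'"
  shows "\<forall>g. \<forall>x\<in>idem S1 m. \<forall>y\<in>idem S1 m. \<forall>a\<in>Ekg S2 m z \<phi> (-g).
           \<exists>Z\<in>TcE S1 m z \<phi> g.
             Vset (idem S2 m) m z x \<inter>
               phit S2 m z \<phi> g (Vset (idem S2 m) m z y \<inter> Vset (idem S2 m) m z a)
             \<subseteq> iota S1 S2 m z Z"
proof (intro allI ballI)
  fix g x y a
  assume x: "x \<in> idem S1 m" and y: "y \<in> idem S1 m" and a: "a \<in> Ekg S2 m z \<phi> (-g)"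
  have i2: "inverse_semigroup_zero S2 m z" "grading S2 m z \<phi>" using assms(1) unfolding strongly_E_unitary_def by auto
  have i1: "inverse_semigroup_zero S1 m z" "grading S1 m z \<phi>" using assms(2) unfolding strongly_E_unitary_def by auto
  interpret I2: gisg S2 m z \<phi> by (intro gisg.intro isg.intro gisg_axioms.intro i2)
  interpret I1: gisg S1 m z \<phi> by (intro gisg.intro isg.intro gisg_axioms.intro i1)
  interpret E2: slat "idem S2 m" m z by (rule I2.slat_E)
  have sub: "inverse_subsemigroup S1 S2 m z" and cov: "\<forall>x\<in>idem S1 m. \<forall>C. is_cover (idem S1 m) m z x C \<longrightarrow> is_cover (idem S2 m) m z x C"
    using assms(3) unfolding cover_sub_def by auto
  have S12: "S1 \<subseteq> S2" using sub unfolding inverse_subsemigroup_def by blast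
  have E12: "idem S1 m \<subseteq> idem S2 m" using S12 unfolding idem_def by blast
  interpret SB: sub2 "idem S1 m" "idem S2 m" m z
  proof (intro sub2.intro sub2_axioms.intro I1.slat_E I2.slat_E E12)
    fix x C assume "x \<in> idem S1 m" "is_cover (idem S1 m) m z x C"
    then show "is_cover (idem S2 m) m z x C" using cov by blast
  qed
  interpret PM: pmap "idem S2 m" m z "Ekg S2 m z \<phi> (-g)" "Ekg S2 m z \<phi> g" "phikg S2 m z \<phi> g" "phikg S2 m z \<phi> (-g)"
    by (rule I2.pmap_inst)
  let ?V = "Vset (idem S2 m) m z"
  have TcE1: "TcE S2 m z \<phi> (-g) = slat.J (idem S2 m) m z (Ekg S2 m z \<phi> (-g))"
    unfolding TcE_def by (rule E2.ideal_gen_J[OF PM.D1P]) (blast intro: PM.down1)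
  have TcE2: "TcE S2 m z \<phi> g = slat.J (idem S2 m) m z (Ekg S2 m z \<phi> g)"
    unfolding TcE_def by (rule E2.ideal_gen_J[OF PM.D2P]) (blast intro: PM.down2)
  have phit_eq: "phit S2 m z \<phi> g = (THE h. PM.ppred h)"
    unfolding phit_def PM.ppred_def TcE1 TcE2 by simp
  have iota_eq: "iota S1 S2 m z = SB.hi"
    using SB.THE_ipred unfolding iota_def SB.ipred_def by simp
  have iotaV: "iota S1 S2 m z (Vset (idem S1 m) m z e) = Vset (idem S2 m) m z e" if "e \<in> idem S1 m" for e
    using SB.ipred_hi that unfolding iota_eq SB.ipred_def by blast
  have x2: "x \<in> idem S2 m" and y2: "y \<in> idem S2 m" using x y E12 by auto
  have xS: "x \<in> S2" "y \<in> S2" using x2 y2 I2.ES by auto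
  have aE: "a \<in> idem S2 m" using a I2.Ekg_E by blast
  have aS: "a \<in> S2" using aE I2.ES by blast
  have yaE: "m y a \<in> idem S2 m" using y2 aE by simp
  have "m (m y a) a = m y a" using xS aS aE I2.as unfolding idem_def by simp
  then have ya: "m y a \<in> Ekg S2 m z \<phi> (-g)" using I2.Ekg_down[OF a yaE] by blast
  have VyVa: "?V y \<inter> ?V a = ?V (m y a)" using E2.V_Int y2 aE by blast
  obtain t where t: "t \<in> S2" "t \<noteq> z" "\<phi> t = g" "m (m y a) (m (I2.iv t) t) = m y a"
    and q_eq: "phikg S2 m z \<phi> g (m y a) = m t (m (m y a) (I2.iv t))"
    using I2.phi_inv(3)[OF ya] by blast
  define q where "q = phikg S2 m z \<phi> g (m y a)"
  have qE: "q \<in> idem S2 m" unfolding q_def using I2.phi_inv(1)[OF ya] I2.Ekg_E by blast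
  have "phit S2 m z \<phi> g (?V y \<inter> ?V a) = ?V q"
    unfolding VyVa phit_eq q_def using PM.THE_ppred_V[OF ya] .
  moreover have "?V x \<inter> ?V q = ?V (m x q)" using E2.V_Int x2 qE by blast
  ultimately have LHS: "?V x \<inter> phit S2 m z \<phi> g (?V y \<inter> ?V a) = ?V (m x q)" by simp
  define p where "p = m x q"
  have pE: "p \<in> idem S2 m" unfolding p_def using x2 qE by simp
  show "\<exists>Z\<in>TcE S1 m z \<phi> g. ?V x \<inter> phit S2 m z \<phi> g (?V y \<inter> ?V a) \<subseteq> iota S1 S2 m z Z"
  proof (cases "p = z")
    case True
    have "{} \<in> TcE S1 m z \<phi> g" unfolding TcE_def ideal_gen_def gba_ideal_def by blast
    moreover have "?V x \<inter> phit S2 m z \<phi> g (?V y \<inter> ?V a) = {}"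
      using LHS True E2.V_z unfolding p_def by simp
    ultimately show ?thesis by blast
  next
    case False
    define w where "w = m (m x t) y"
    have wS: "w \<in> S2" unfolding w_def using xS t by simp
    have ivtS: "I2.iv t \<in> S2" using t by simp
    have pw: "p = m w (m a (I2.iv t))"
      unfolding p_def q_def q_eq w_def using xS aS t ivtS by (simp add: I2.as)
    have wnz: "w \<noteq> z" using False pw aS ivtS by auto
    obtain s' where s': "s' \<in> S1" "nle S2 m w s'" using assms(4) x y t unfolding w_def by blast
    obtain f where f: "f \<in> idem S2 m" "w = m f s'" using s'(2) unfolding nle_def by blast
    have s'2: "s' \<in> S2" using s' S12 by blast
    have fS: "f \<in> S2" using f I2.ES by blast
    have s'nz: "s' \<noteq> z" using wnz f fS by auto
    have fnz: "f \<noteq> z" using wnz f s'2 by auto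
    have xtnz: "m x t \<noteq> z"
    proof
      assume h: "m x t = z"
      have "w = m z y" unfolding w_def h ..
      then show False using wnz xS by simp
    qed
    have xnz: "x \<noteq> z" using xtnz t by auto
    have ynz: "y \<noteq> z" using wnz xS t unfolding w_def by auto
    have "\<phi> w = \<phi> (m x t) + \<phi> y" unfolding w_def using I2.grm xS t wnz unfolding w_def by simp
    also have "\<dots> = \<phi> x + \<phi> t + \<phi> y" using I2.grm xS t xtnz by simp
    also have "\<dots> = g" using I2.E_phi x2 xnz y2 ynz t by simp
    finally have pw_g: "\<phi> w = g" .
    have "\<phi> w = \<phi> f + \<phi> s'" using I2.grm fS s'2 wnz f by simp
    then have ps': "\<phi> s' = g" using pw_g I2.E_phi f fnz by simp
    have inv_eq: "sinv S1 m s' = I2.iv s'" using sinv_sub[OF i1(1) i2(1) S12 s'(1)] .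
    define k where "k = m s' (sinv S1 m s')"
    have k1: "k \<in> idem S1 m" unfolding k_def using I1.aa_E s'(1) by blast
    have k2: "k = m s' (I2.iv s')" unfolding k_def inv_eq ..
    have kE: "k \<in> idem S2 m" using k1 E12 by blast
    have kS: "k \<in> S2" using kE I2.ES by blast
    define e where "e = m x k"
    have e1: "e \<in> idem S1 m" unfolding e_def using x k1 by simp
    have e2: "e \<in> idem S2 m" using e1 E12 by blast
    have eEkg: "e \<in> Ekg S1 m z \<phi> g"
      unfolding Ekg_def using e1 s'(1) s'nz ps' x unfolding nle_def e_def k_def by blast
    define Z where "Z = Vset (idem S1 m) m z e"
    have ZT: "Z \<in> TcE S1 m z \<phi> g" unfolding TcE_def ideal_gen_def Z_def using eEkg by blast
    have iZ: "iota S1 S2 m z Z = ?V e" unfolding Z_def using iotaV[OF e1] .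
    have ivw: "I2.iv w = m (I2.iv s') f" using I2.iv_mult[OF fS s'2] I2.iv_E[OF f(1)] f by simp
    have ww: "m w (I2.iv w) = m f k"
    proof -
      have "m w (I2.iv w) = m f (m k f)" unfolding ivw unfolding f(2) k2 using fS s'2 by (simp add: I2.as)
      also have "\<dots> = m f (m f k)" using I2.E_comm[OF kE f(1)] by simp
      also have "\<dots> = m f k" using I2.idem_l[OF f(1) kS] .
      finally show ?thesis .
    qed
    have p_ww: "p = m (m f k) p"
    proof -
      have cS: "m a (I2.iv t) \<in> S2" using aS ivtS by simp
      have "m (m w (I2.iv w)) p = m w (m (I2.iv w) (m w (m a (I2.iv t))))" unfolding pw using wS cS by (simp add: I2.as)
      also have "\<dots> = p" unfolding pw using I2.iv1'[OF wS cS] .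
      finally show ?thesis using ww by simp
    qed
    have pS: "p \<in> S2" using pE I2.ES by blast
    have fkE: "m f k \<in> idem S2 m" using f kE by simp
    have px: "m p x = p"
    proof -
      have qS: "q \<in> S2" using qE I2.ES by blast
      have "m p x = m x (m q x)" unfolding p_def using xS qS by (simp add: I2.as)
      also have "\<dots> = m x (m x q)" using I2.E_comm[OF qE x2] by simp
      also have "\<dots> = p" unfolding p_def using I2.idem_l[OF x2 qS] .
      finally show ?thesis .
    qed
    have pk: "m p k = p"
    proof -
      have "m p k = m (m (m f k) p) k" using p_ww by simp
      also have "\<dots> = m (m f k) (m p k)" using fkE pS kS I2.ES by (simp add: I2.as)
      also have "\<dots> = m (m f k) (m k p)" using I2.E_comm[OF pE kE] by simp
      also have "\<dots> = m f (m k (m k p))" using fS kS pS by (simp add: I2.as)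
      also have "\<dots> = m f (m k p)" using I2.idem_l[OF kE pS] by simp
      also have "\<dots> = m (m f k) p" using fS kS pS by (simp add: I2.as)
      finally show ?thesis using p_ww by simp
    qed
    have "m p e = p"
    proof -
      have "m p e = m (m p x) k" unfolding e_def using pS xS kS by (simp add: I2.as)
      also have "\<dots> = p" using px pk by simp
      finally show ?thesis .
    qed
    then have "sle m p e" unfolding sle_def .
    then have "?V p \<subseteq> ?V e" using E2.V_mono pE e2 by blast
    then have "?V x \<inter> phit S2 m z \<phi> g (?V y \<inter> ?V a) \<subseteq> iota S1 S2 m z Z"
      using LHS iZ unfolding p_def by simp
    then show ?thesis using ZT by blast
  qed
qed


end
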